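(* Let $G$ be a finite non-cyclic $p$-group having no subgroup isomorphic to a generalized quaternion group $Q_{2^n}$. Suppose that either (i) the derived subgroup $G'$ is non-cyclic, or (ii) there exists $g\in G$ with $o(g)>p$ and $\langle g\rangle\cap G'=\{e\}$. Then $E(\mathcal{P}_e(G))\subsetneq E(\Delta_D(G))$.
   Context: The enhanced power graph $\mathcal{P}_e(G)$ of a group $G$ has vertex set $G$, with distinct $x,y$ adjacent iff $\langle x,y\rangle$ is cyclic; $E(\cdot)$ denotes the edge set. For a finite group $G$ with Schur multiplier $M(G)$, a Schur cover is a group $\tilde G$ with central extension $\{e\}\to M(G)\xrightarrow{\iota}\tilde G\xrightarrow{\pi}G\to\{e\}$, $\iota(M(G))\subseteq Z(\tilde G)\cap[\tilde G,\tilde G]$, of maximal order. The deep commuting graph $\Delta_D(G)$ has vertex set $G$, distinct vertices adjacent iff their preimages under $\pi$ commute in $\tilde G$. $Q_{2^n}=\langle a,b\mid a^{2^{n-1}}=e,\ b^2=a^{2^{n-2}},\ ab=ba^{-1}\rangle$. *)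

theory Defs
  imports "HOL-Algebra.Algebra"
begin

definition center_of :: "('a, 'b) monoid_scheme \<Rightarrow> 'a set" where
  "center_of G = {z \<in> carrier G. \<forall>x \<in> carrier G. z \<otimes>\<^bsub>G\<^esub> x = x \<otimes>\<^bsub>G\<^esub> z}"

definition p_group :: "nat \<Rightarrow> ('a, 'b) monoid_scheme \<Rightarrow> bool" where
  "p_group p G \<longleftrightarrow> group G \<and> finite (carrier G) \<and> Factorial_Ring.prime p \<and> (\<exists>k. order G = p ^ k)"

text \<open>Concrete model of the generalized quaternion group Q_{2^n} (n >= 3):
  the pair (i,j) stands for a^i b^j, with 0 <= i < 2^(n-1), j in {0,1}.\<close>
definition quaternion_group :: "nat \<Rightarrow> (nat \<times> nat) monoid" where
  "quaternion_group n =
    (let m = 2 ^ (n - 1) in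
     \<lparr> carrier = {(i, j). i < m \<and> j < 2},
       monoid.mult = (\<lambda>(i, j) (k, l).
          if j = 0 then ((i + k) mod m, l)
          else if l = 0 then ((i + m - k) mod m, 1)
          else ((i + m - k + 2 ^ (n - 2)) mod m, 0)),
       one = (0, 0) \<rparr>)"

definition has_gen_quaternion_subgroup :: "('a, 'b) monoid_scheme \<Rightarrow> bool" where
  "has_gen_quaternion_subgroup G \<longleftrightarrow>
     (\<exists>H n. n \<ge> 3 \<and> subgroup H G \<and> (G\<lparr>carrier := H\<rparr>) \<cong> quaternion_group n)"

definition stem_extension :: "('c, 'd) monoid_scheme \<Rightarrow> ('a, 'b) monoid_scheme \<Rightarrow> ('c \<Rightarrow> 'a) \<Rightarrow> bool" where
  "stem_extension Gt G \<pi> \<longleftrightarrow> group Gt \<and> group G \<and> \<pi> \<in> epi Gt G \<and>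
     kernel Gt G \<pi> \<subseteq> center_of Gt \<inter> derived Gt (carrier Gt)"

text \<open>Schur cover: a stem extension of maximal order (maximality tested against all
  stem extensions carried by the type nat, which represents every finite group up to
  isomorphism).\<close>
definition schur_cover :: "('c, 'd) monoid_scheme \<Rightarrow> ('a, 'b) monoid_scheme \<Rightarrow> ('c \<Rightarrow> 'a) \<Rightarrow> bool" where
  "schur_cover Gt G \<pi> \<longleftrightarrow> stem_extension Gt G \<pi> \<and> finite (carrier Gt) \<and>
     (\<forall>(K :: nat monoid) \<sigma>. stem_extension K G \<sigma> \<longrightarrow> order K \<le> order Gt)"

definition enhanced_power_edges :: "('a, 'b) monoid_scheme \<Rightarrow> 'a set set" where
  "enhanced_power_edges G = {{x, y} | x y. x \<in> carrier G \<and> y \<in> carrier G \<and> x \<noteq> y \<and>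
      cyclic_group (subgroup_generated G {x, y})}"

definition deep_commuting_edges ::
  "('c, 'd) monoid_scheme \<Rightarrow> ('a, 'b) monoid_scheme \<Rightarrow> ('c \<Rightarrow> 'a) \<Rightarrow> 'a set set" where
  "deep_commuting_edges Gt G \<pi> = {{x, y} | x y. x \<in> carrier G \<and> y \<in> carrier G \<and> x \<noteq> y \<and>
      (\<forall>u \<in> carrier Gt. \<forall>v \<in> carrier Gt. \<pi> u = x \<longrightarrow> \<pi> v = y \<longrightarrow>
          u \<otimes>\<^bsub>Gt\<^esub> v = v \<otimes>\<^bsub>Gt\<^esub> u)}"

end

theory Submission
  imports Defs
begin


context group begin

lemma finite_subgroupI:
  assumes fin: "finite (carrier G)" and S: "S \<subseteq> carrier G" and one: "\<one> \<in> S"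
    and mult: "\<And>x y. x \<in> S \<Longrightarrow> y \<in> S \<Longrightarrow> x \<otimes> y \<in> S"
  shows "subgroup S G"
proof -
  have pw: "x [^] (n::nat) \<in> S" if "x \<in> S" for x n
    using that by (induction n) (auto intro: one mult)
  have inv: "inv x \<in> S" if x: "x \<in> S" for x
  proof -
    have xc: "x \<in> carrier G" using x S by auto
    have o: "ord x \<ge> 1" using ord_ge_1[OF fin xc] .
    have "x \<otimes> x [^] (ord x - 1) = x [^] (Suc (ord x - 1))"
      using xc by (rule nat_pow_Suc2[symmetric])
    also have "\<dots> = \<one>" using o xc by simp
    finally have e: "x \<otimes> x [^] (ord x - 1) = \<one>" .
    have "inv x = x [^] (ord x - 1)"
      using xc e by (metis inv_equality nat_pow_closed nat_pow_comm nat_pow_Suc2 nat_pow_Suc)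
    thus ?thesis using pw[OF x] by simp
  qed
  show ?thesis
    by (rule subgroupI) (use S one mult inv in auto)
qed

lemma ord_primepow:
  assumes "finite (carrier G)" "order G = p ^ k" "Factorial_Ring.prime p" "x \<in> carrier G"
  shows "\<exists>e. ord x = p ^ e"
  using ord_dvd_group_order[OF assms(4)] assms(2,3) divides_primepow_nat by metis

lemma gen_nat_pow_closed:
  assumes "S \<subseteq> carrier G" "y \<in> generate G S"
  shows "y [^] (n::nat) \<in> generate G S"
  using subgroup_int_pow_closed[OF generate_is_subgroup[OF assms(1)] assms(2), of "int n"]
  by (simp add: int_pow_int)

lemma pow_in_generate_gcd:
  assumes x: "x \<in> carrier G" and d: "gcd (ord x) j dvd i"
  shows "x [^] (i::nat) \<in> generate G {x [^] (j::nat)}"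
proof (cases "j = 0")
  case True
  then have "ord x dvd i" using d by simp
  then have "x [^] i = \<one>" using x pow_eq_id by blast
  then show ?thesis by (simp add: generate.one)
next
  case False
  obtain u v where uv: "j * u = ord x * v + gcd j (ord x)" using bezout_nat[OF False] by blast
  obtain q where q: "i = gcd (ord x) j * q" using d by blast
  have "x [^] (j * u) = x [^] (ord x * v) \<otimes> x [^] (gcd j (ord x))"
    using uv x by (simp add: nat_pow_mult)
  also have "x [^] (ord x * v) = \<one>" using x by (simp add: nat_pow_pow[symmetric])
  finally have e: "x [^] (j * u) = x [^] gcd (ord x) j" using x by (simp add: gcd.commute)
  have "x [^] i = (x [^] (j*u)) [^] q" using q e x by (simp add: nat_pow_pow)
  also have "\<dots> = (x [^] j) [^] (u * q)" using x by (simp add: nat_pow_pow mult.assoc)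
  finally have "x [^] i = (x [^] j) [^] (u * q)" .
  moreover have "(x [^] j) [^] (u * q) \<in> generate G {x [^] j}"
    using x by (intro gen_nat_pow_closed[of "{x [^] j}" "x [^] j"]) (auto intro: generate.incl)
  ultimately show ?thesis by simp
qed

lemma cyclic_ppow_sub:
  assumes c: "c \<in> carrier G" and oc: "ord c = p ^ m" and pr: "Factorial_Ring.prime p"
    and x: "x \<in> generate G {c}" and y: "y \<in> generate G {c}" and ox: "ord x = p" and y1: "y \<noteq> \<one>"
  shows "x \<in> generate G {y}"
proof -
  have p1: "p > 1" using pr prime_gt_1_nat by blast
  have o0: "ord c \<noteq> 0" using oc p1 by simp
  obtain i where i: "x = c [^] (i::nat)" using x generate_pow_nat[OF c o0] by blast
  obtain j where j: "y = c [^] (j::nat)" using y generate_pow_nat[OF c o0] by blast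
  have oi: "ord (c [^] i) = p" using ox i by simp
  have i0: "i \<noteq> 0"
  proof
    assume "i = 0"
    then have "ord (c [^] i) = 1" by simp
    then show False using oi p1 by linarith
  qed
  have "ord (c [^] i) = ord c div gcd (ord c) i" using ord_pow_gen[OF c, of i] i0 by presburger
  then have "p ^ m div gcd (p ^ m) i = p" using oi oc by metis
  moreover obtain f where f: "f \<le> m" "gcd (p ^ m) i = p ^ f"
    using divides_primepow_nat[OF pr] by (metis gcd_dvd1)
  ultimately have "p ^ m div p ^ f = p" by simp
  then have "p ^ (m - f) = p ^ 1" using f p1 by (simp add: power_diff)
  then have mf: "m - f = 1" using p1 power_inject_exp by blast
  have nj: "\<not> p ^ m dvd j"
  proof
    assume "p ^ m dvd j"
    then have "ord c dvd j" using oc by simp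
    then have "c [^] j = \<one>" using pow_eq_id[OF c] by simp
    then have "y = \<one>" using j by simp
    then show False using y1 by simp
  qed
  obtain e where e: "e \<le> m" "gcd (p ^ m) j = p ^ e"
    using divides_primepow_nat[OF pr] by (metis gcd_dvd1)
  have "e \<noteq> m" using e nj by (metis gcd_dvd2)
  then have "e \<le> f" using e mf by linarith
  then have "gcd (p ^ m) j dvd gcd (p ^ m) i" using e f by (simp add: le_imp_power_dvd)
  then have "gcd (ord c) j dvd i" using oc by (metis dvd_trans gcd_dvd2)
  then have "c [^] i \<in> generate G {c [^] j}" by (rule pow_in_generate_gcd[OF c])
  then show ?thesis using i j by simp
qed

end


lemma action_to_group_action:
  assumes grp: "group G"
    and act: "\<And>g x. g \<in> carrier G \<Longrightarrow> x \<in> E \<Longrightarrow> \<phi> g x \<in> E"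
    and one: "\<And>x. x \<in> E \<Longrightarrow> \<phi> \<one>\<^bsub>G\<^esub> x = x"
    and comp: "\<And>g h x. g \<in> carrier G \<Longrightarrow> h \<in> carrier G \<Longrightarrow> x \<in> E \<Longrightarrow> \<phi> (g \<otimes>\<^bsub>G\<^esub> h) x = \<phi> g (\<phi> h x)"
  shows "group_action G E (\<lambda>g. restrict (\<phi> g) E)"
proof -
  interpret G: group G by (rule grp)
  have inv1: "\<phi> (inv\<^bsub>G\<^esub> g) (\<phi> g x) = x" if "g \<in> carrier G" "x \<in> E" for g x
    using comp[of "inv\<^bsub>G\<^esub> g" g x] one that by simp
  have inv2: "\<phi> g (\<phi> (inv\<^bsub>G\<^esub> g) x) = x" if "g \<in> carrier G" "x \<in> E" for g x
    using comp[of g "inv\<^bsub>G\<^esub> g" x] one that by simp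
  have bij: "restrict (\<phi> g) E \<in> Bij E" if g: "g \<in> carrier G" for g
  proof -
    have "bij_betw (\<phi> g) E E"
    proof (rule bij_betwI[where g = "\<phi> (inv\<^bsub>G\<^esub> g)"])
      show "\<phi> g \<in> E \<rightarrow> E" using act g by auto
      show "\<phi> (inv\<^bsub>G\<^esub> g) \<in> E \<rightarrow> E" using act g by auto
    qed (use inv1 inv2 g in auto)
    then show ?thesis unfolding Bij_def by (simp add: bij_betw_restrict_eq)
  qed
  show ?thesis
    unfolding group_action_def
  proof (rule group_hom.intro[OF grp group_BijGroup], unfold_locales)
    show "(\<lambda>g. restrict (\<phi> g) E) \<in> hom G (BijGroup E)"
    proof (rule homI)
      show "restrict (\<phi> g) E \<in> carrier (BijGroup E)" if "g \<in> carrier G" for g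
        using bij[OF that] by (simp add: BijGroup_def)
      show "restrict (\<phi> (g \<otimes>\<^bsub>G\<^esub> h)) E = restrict (\<phi> g) E \<otimes>\<^bsub>BijGroup E\<^esub> restrict (\<phi> h) E"
        if "g \<in> carrier G" "h \<in> carrier G" for g h
        using that bij[of g] bij[of h] comp act by (auto simp: BijGroup_def compose_def)
    qed
  qed
qed

lemma fixpoints_mod:
  assumes grp: "group G" and fin: "finite (carrier G)" and ord: "order G = p ^ k"
    and pr: "Factorial_Ring.prime p" and finE: "finite E"
    and act: "\<And>g x. g \<in> carrier G \<Longrightarrow> x \<in> E \<Longrightarrow> \<phi> g x \<in> E"
    and one: "\<And>x. x \<in> E \<Longrightarrow> \<phi> \<one>\<^bsub>G\<^esub> x = x"
    and comp: "\<And>g h x. g \<in> carrier G \<Longrightarrow> h \<in> carrier G \<Longrightarrow> x \<in> E \<Longrightarrow> \<phi> (g \<otimes>\<^bsub>G\<^esub> h) x = \<phi> g (\<phi> h x)"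
  shows "card E mod p = card {x \<in> E. \<forall>g \<in> carrier G. \<phi> g x = x} mod p"
proof -
  interpret G: group G by (rule grp)
  define \<psi> where "\<psi> = (\<lambda>g. restrict (\<phi> g) E)"
  interpret A: group_action G E \<psi>
    unfolding \<psi>_def by (rule action_to_group_action[OF grp act one comp])
  have p1: "p > 1" using pr prime_gt_1_nat by blast
  let ?O = "orbits G E \<psi>"
  have finO: "finite ?O" using finE unfolding orbits_def by simp
  have "(\<Sum>orb\<in>?O. \<Sum>x\<in>orb. (1::nat)) = (\<Sum>x\<in>E. 1)" by (rule A.disjoint_sum[OF finE])
  then have sumE: "card E = (\<Sum>orb\<in>?O. card orb)" by simp
  have orbcard: "card orb mod p = (if card orb = 1 then 1 else 0)" if orbO: "orb \<in> ?O" for orb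
  proof -
    obtain x where x: "x \<in> E" "orb = orbit G \<psi> x" using orbO unfolding orbits_def by blast
    have "card orb * card (stabilizer G \<psi> x) = p ^ k"
      using A.orbit_stabilizer_theorem[OF x(1)] x(2) ord by simp
    then have "card orb dvd p ^ k" by (metis dvd_triv_left)
    then obtain i where i: "card orb = p ^ i" using divides_primepow_nat[OF pr] by blast
    show ?thesis
    proof (cases "i = 0")
      case True then show ?thesis using i p1 by simp
    next
      case False then show ?thesis using i p1 by simp
    qed
  qed
  have "card E mod p = (\<Sum>orb\<in>?O. card orb mod p) mod p"
    using sumE by (simp add: mod_sum_eq)
  also have "(\<Sum>orb\<in>?O. card orb mod p) = (\<Sum>orb\<in>?O. if card orb = 1 then 1 else 0)"
    using orbcard by (intro sum.cong) auto
  also have "\<dots> = card {orb \<in> ?O. card orb = 1}"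
  proof -
    have "(\<Sum>orb\<in>?O. if card orb = 1 then 1 else 0) = card (?O \<inter> {orb. card orb = 1})"
      using finO by (simp add: sum.If_cases)
    moreover have "?O \<inter> {orb. card orb = 1} = {orb \<in> ?O. card orb = 1}" by blast
    ultimately show ?thesis by simp
  qed
  also have "card {orb \<in> ?O. card orb = 1} = card {x \<in> E. \<forall>g \<in> carrier G. \<phi> g x = x}"
  proof -
    have orb_x: "orbit G \<psi> x = {\<phi> g x | g. g \<in> carrier G}" if "x \<in> E" for x
      using that unfolding orbit_def \<psi>_def by auto
    have "{orb \<in> ?O. card orb = 1} = (\<lambda>x. {x}) ` {x \<in> E. \<forall>g \<in> carrier G. \<phi> g x = x}"
    proof (intro equalityI subsetI)
      fix orb assume "orb \<in> {orb \<in> ?O. card orb = 1}"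
      then obtain x where x: "x \<in> E" "orb = orbit G \<psi> x" "card orb = 1" unfolding orbits_def by blast
      have "\<phi> \<one>\<^bsub>G\<^esub> x \<in> orb" using x(2) orb_x[OF x(1)] G.one_closed by blast
      then have xin: "x \<in> orb" using one[OF x(1)] by simp
      then have oe: "orb = {x}" using x(3) by (metis card_1_singletonE singletonD)
      have "\<forall>g \<in> carrier G. \<phi> g x = x"
      proof
        fix g assume "g \<in> carrier G"
        then have "\<phi> g x \<in> orb" using x(2) orb_x[OF x(1)] by blast
        then show "\<phi> g x = x" using oe by simp
      qed
      then show "orb \<in> (\<lambda>x. {x}) ` {x \<in> E. \<forall>g \<in> carrier G. \<phi> g x = x}" using x oe by blast
    next
      fix orb assume "orb \<in> (\<lambda>x. {x}) ` {x \<in> E. \<forall>g \<in> carrier G. \<phi> g x = x}"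
      then obtain x where x: "x \<in> E" "\<forall>g \<in> carrier G. \<phi> g x = x" "orb = {x}" by blast
      have "orbit G \<psi> x = {x}" unfolding orb_x[OF x(1)] using x(2) G.one_closed by force
      then show "orb \<in> {orb \<in> ?O. card orb = 1}" using x unfolding orbits_def by auto
    qed
    then show ?thesis by (simp add: card_image)
  qed
  finally show ?thesis .
qed


context group begin

lemma subgroup_nat_pow_closed:
  assumes "subgroup H G" "h \<in> H" shows "h [^] (n::nat) \<in> H"
  using subgroup_int_pow_closed[OF assms, of "int n"] by (simp add: int_pow_int)

lemma exists_ord_p:
  assumes fin: "finite (carrier G)" and o: "order G = p ^ k" and pr: "Factorial_Ring.prime p"
    and z: "z \<in> carrier G" and z1: "z \<noteq> \<one>"
  shows "\<exists>n::nat. ord (z [^] n) = p"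
proof -
  obtain e where e: "ord z = p ^ e" using ord_primepow[OF fin o pr z] by blast
  have "e \<noteq> 0" using e z1 ord_eq_1[OF z] by auto
  then obtain f where f: "e = Suc f" by (cases e) auto
  have p0: "p \<noteq> 0" using pr by auto
  have "ord (z [^] (p ^ f)) = ord z div p ^ f"
    by (rule ord_pow[OF z]) (use e f p0 in auto)
  also have "\<dots> = p" using e f p0 by simp
  finally show ?thesis by blast
qed

lemma center_meets_normal:
  assumes fin: "finite (carrier G)" and o: "order G = p ^ k" and pr: "Factorial_Ring.prime p"
    and N: "subgroup N G" and nrm: "\<And>g n. g \<in> carrier G \<Longrightarrow> n \<in> N \<Longrightarrow> g \<otimes> n \<otimes> inv g \<in> N"
    and nt: "N \<noteq> {\<one>}"
  shows "\<exists>z \<in> N. z \<in> center_of G \<and> ord z = p"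
proof -
  have p1: "p > 1" using pr prime_gt_1_nat by blast
  have Nc: "N \<subseteq> carrier G" using N subgroup.subset by blast
  have finN: "finite N" using fin Nc finite_subset by blast
  let ?F = "{x \<in> N. \<forall>g \<in> carrier G. g \<otimes> x \<otimes> inv g = x}"
  have md: "card N mod p = card ?F mod p"
  proof (rule fixpoints_mod[OF is_group fin o pr finN])
    show "g \<otimes> x \<otimes> inv g \<in> N" if "g \<in> carrier G" "x \<in> N" for g x using nrm that by blast
    show "\<one> \<otimes> x \<otimes> inv \<one> = x" if "x \<in> N" for x using that Nc by auto
    show "g \<otimes> h \<otimes> x \<otimes> inv (g \<otimes> h) = g \<otimes> (h \<otimes> x \<otimes> inv h) \<otimes> inv g"
      if "g \<in> carrier G" "h \<in> carrier G" "x \<in> N" for g h x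
      using that Nc by (auto simp: inv_mult_group m_assoc)
  qed
  have "card N dvd order G" using lagrange[OF N] by (metis dvd_triv_right)
  then obtain j where j: "card N = p ^ j" using o divides_primepow_nat[OF pr] by auto
  have oneN: "\<one> \<in> N" using N subgroup.one_closed by blast
  have "j \<noteq> 0"
  proof
    assume "j = 0"
    then have "card N = 1" using j by simp
    then have "N = {\<one>}" using oneN by (metis card_1_singletonE singletonD)
    then show False using nt by simp
  qed
  then have "card N mod p = 0" using j by simp
  then have cF: "card ?F mod p = 0" using md by simp
  have oneF: "\<one> \<in> ?F" using oneN by auto
  have finF: "finite ?F" using finN by simp
  have "\<exists>z \<in> ?F. z \<noteq> \<one>"
  proof (rule ccontr)
    assume "\<not> ?thesis"
    then have "?F = {\<one>}" using oneF by blast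
    then have "card ?F = 1" by simp
    then show False using cF p1 by simp
  qed
  then obtain z where zF: "z \<in> ?F" and z1: "z \<noteq> \<one>" by blast
  have zc: "z \<in> carrier G" using zF Nc by auto
  have zcomm: "z \<otimes> g = g \<otimes> z" if g: "g \<in> carrier G" for g
  proof -
    have "g \<otimes> z \<otimes> inv g = z" using zF g by auto
    then have "g \<otimes> z \<otimes> inv g \<otimes> g = z \<otimes> g" by simp
    then show ?thesis using g zc by (simp add: m_assoc)
  qed
  obtain n where n: "ord (z [^] (n::nat)) = p" using exists_ord_p[OF fin o pr zc z1] by blast
  have "z [^] n \<in> N" using N zF by (auto intro: subgroup_nat_pow_closed)
  moreover have "z [^] n \<in> center_of G"
    unfolding center_of_def using zc zcomm group_commutes_pow by auto
  ultimately show ?thesis using n by blast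
qed

end


context group begin

lemma inv_cancel_l [simp]: "x \<in> carrier G \<Longrightarrow> y \<in> carrier G \<Longrightarrow> inv x \<otimes> (x \<otimes> y) = y"
  by (simp add: m_assoc[symmetric])
lemma inv_cancel_r [simp]: "x \<in> carrier G \<Longrightarrow> y \<in> carrier G \<Longrightarrow> x \<otimes> (inv x \<otimes> y) = y"
  by (simp add: m_assoc[symmetric])

lemma centerD: "z \<in> center_of G \<Longrightarrow> a \<in> carrier G \<Longrightarrow> z \<otimes> a = a \<otimes> z"
  unfolding center_of_def by auto
lemma centerC: "z \<in> center_of G \<Longrightarrow> z \<in> carrier G"
  unfolding center_of_def by auto

lemma lift_commute:
  fixes H :: "('c, 'd) monoid_scheme" and h :: "'a \<Rightarrow> 'c"
  assumes grpH: "group H" and hom: "h \<in> hom G H" and surj: "h ` carrier G = carrier H"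
    and kerZ: "kernel G H h \<subseteq> center_of G"
    and x: "x \<in> center_of H" and xp: "x [^]\<^bsub>H\<^esub> p = \<one>\<^bsub>H\<^esub>"
    and y: "y \<in> derived H (carrier H) \<or> (\<exists>g \<in> carrier H. y = g [^]\<^bsub>H\<^esub> (p::nat))"
  shows "\<forall>u \<in> carrier G. \<forall>v \<in> carrier G. h u = x \<longrightarrow> h v = y \<longrightarrow> u \<otimes> v = v \<otimes> u"
proof -
  interpret hh: group_hom G H h
    by (rule group_hom.intro[OF is_group grpH]) (simp add: group_hom_axioms_def hom)
  have hc: "h a \<in> carrier H" if "a \<in> carrier G" for a using that by simp
  have lifts: "\<exists>k \<in> center_of G. v = k \<otimes> w"
    if "v \<in> carrier G" "w \<in> carrier G" "h v = h w" for v w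
  proof -
    have "h (v \<otimes> inv w) = \<one>\<^bsub>H\<^esub>" using that by simp
    then have "v \<otimes> inv w \<in> kernel G H h" using that unfolding kernel_def by simp
    then have "v \<otimes> inv w \<in> center_of G" using kerZ by blast
    moreover have "v = (v \<otimes> inv w) \<otimes> w" using that by (simp add: m_assoc)
    ultimately show ?thesis by blast
  qed
  show ?thesis
  proof (intro ballI impI)
    fix u v assume u: "u \<in> carrier G" and v: "v \<in> carrier G" and hu: "h u = x" and hv: "h v = y"
    define \<mu> where "\<mu> = (\<lambda>w. u \<otimes> w \<otimes> inv u \<otimes> inv w)"
    have \<mu>c: "\<mu> w \<in> carrier G" if "w \<in> carrier G" for w using that u unfolding \<mu>_def by simp
    have \<mu>Z: "\<mu> w \<in> center_of G" if w: "w \<in> carrier G" for w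
    proof -
      have "h (\<mu> w) = x \<otimes>\<^bsub>H\<^esub> h w \<otimes>\<^bsub>H\<^esub> inv\<^bsub>H\<^esub> x \<otimes>\<^bsub>H\<^esub> inv\<^bsub>H\<^esub> (h w)"
        unfolding \<mu>_def using u w hu by simp
      also have "x \<otimes>\<^bsub>H\<^esub> h w = h w \<otimes>\<^bsub>H\<^esub> x" using x w unfolding center_of_def by simp
      also have "h w \<otimes>\<^bsub>H\<^esub> x \<otimes>\<^bsub>H\<^esub> inv\<^bsub>H\<^esub> x \<otimes>\<^bsub>H\<^esub> inv\<^bsub>H\<^esub> (h w) = \<one>\<^bsub>H\<^esub>"
        using x w hu u hc[OF w] unfolding center_of_def by (simp add: hh.H.m_assoc)
      finally have "\<mu> w \<in> kernel G H h" unfolding kernel_def using \<mu>c[OF w] by simp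
      then show ?thesis using kerZ by blast
    qed
    have conj: "u \<otimes> w \<otimes> inv u = \<mu> w \<otimes> w" if w: "w \<in> carrier G" for w
      unfolding \<mu>_def using u w by (simp add: m_assoc)
    have \<mu>_mult: "\<mu> (a \<otimes> b) = \<mu> a \<otimes> \<mu> b" if a: "a \<in> carrier G" and b: "b \<in> carrier G" for a b
    proof -
      have "\<mu> (a \<otimes> b) = (u \<otimes> a \<otimes> inv u) \<otimes> (u \<otimes> b \<otimes> inv u) \<otimes> inv b \<otimes> inv a"
        unfolding \<mu>_def using u a b by (simp add: m_assoc inv_mult_group)
      also have "\<dots> = (\<mu> a \<otimes> a) \<otimes> (\<mu> b \<otimes> b) \<otimes> inv b \<otimes> inv a"
        using conj a b by simp
      also have "\<dots> = \<mu> a \<otimes> (a \<otimes> \<mu> b) \<otimes> inv a"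
        using a b \<mu>c by (simp add: m_assoc)
      also have "a \<otimes> \<mu> b = \<mu> b \<otimes> a" using centerD[OF \<mu>Z[OF b] a] by simp
      also have "\<mu> a \<otimes> (\<mu> b \<otimes> a) \<otimes> inv a = \<mu> a \<otimes> \<mu> b"
        using a b \<mu>c by (simp add: m_assoc)
      finally show ?thesis .
    qed
    have comm_iff: "u \<otimes> w = w \<otimes> u" if w: "w \<in> carrier G" "\<mu> w = \<one>" for w
    proof -
      have "u \<otimes> w \<otimes> inv u \<otimes> inv w \<otimes> w \<otimes> u = w \<otimes> u" using w unfolding \<mu>_def by simp
      then show ?thesis using u w by (simp add: m_assoc)
    qed
    have via_lift: "u \<otimes> v = v \<otimes> u" if w: "w \<in> carrier G" "h w = y" "u \<otimes> w = w \<otimes> u" for w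
    proof -
      obtain k where k: "k \<in> center_of G" "v = k \<otimes> w" using lifts[OF v w(1)] hv w(2) by auto
      have kc: "k \<in> carrier G" using centerC[OF k(1)] .
      have "u \<otimes> (k \<otimes> w) = (u \<otimes> k) \<otimes> w" using u kc w by (simp add: m_assoc)
      also have "u \<otimes> k = k \<otimes> u" using centerD[OF k(1) u] by simp
      also have "(k \<otimes> u) \<otimes> w = k \<otimes> (u \<otimes> w)" using u kc w by (simp add: m_assoc)
      also have "u \<otimes> w = w \<otimes> u" using w(3) .
      also have "k \<otimes> (w \<otimes> u) = k \<otimes> w \<otimes> u" using u kc w by (simp add: m_assoc)
      finally show ?thesis using k by simp
    qed
    have \<mu>1: "\<mu> \<one> = \<one>" unfolding \<mu>_def using u by simp
    have \<mu>inv: "\<mu> (inv a) = inv (\<mu> a)" if a: "a \<in> carrier G" for a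
    proof -
      have "\<mu> a \<otimes> \<mu> (inv a) = \<one>" using \<mu>_mult[of a "inv a"] a \<mu>1 by simp
      then show ?thesis using a \<mu>c by (simp add: inv_equality[symmetric] inv_comm)
    qed
    have good: "u \<otimes> v = v \<otimes> u" if w: "w \<in> carrier G" "h w = y" "\<mu> w = \<one>" for w
      using via_lift[OF w(1,2) comm_iff[OF w(1,3)]] .
    have gen_ok: "\<exists>w \<in> carrier G. h w = z \<and> \<mu> w = \<one>" if z: "z \<in> derived_set H (carrier H)" for z
    proof -
      obtain y1 y2 where y12: "y1 \<in> carrier H" "y2 \<in> carrier H"
        "z = y1 \<otimes>\<^bsub>H\<^esub> y2 \<otimes>\<^bsub>H\<^esub> inv\<^bsub>H\<^esub> y1 \<otimes>\<^bsub>H\<^esub> inv\<^bsub>H\<^esub> y2" using z by blast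
      obtain w1 where w1: "w1 \<in> carrier G" "h w1 = y1" using y12(1) surj by (metis imageE)
      obtain w2 where w2: "w2 \<in> carrier G" "h w2 = y2" using y12(2) surj by (metis imageE)
      let ?w = "w1 \<otimes> w2 \<otimes> inv w1 \<otimes> inv w2"
      have "h ?w = z" using y12 w1 w2 by simp
      moreover have "\<mu> ?w = \<one>"
      proof -
        have "\<mu> ?w = \<mu> w1 \<otimes> \<mu> w2 \<otimes> inv (\<mu> w1) \<otimes> inv (\<mu> w2)"
          using w1 w2 by (simp add: \<mu>_mult \<mu>inv)
        also have "\<mu> w1 \<otimes> \<mu> w2 = \<mu> w2 \<otimes> \<mu> w1" using centerD[OF \<mu>Z[OF w1(1)] \<mu>c[OF w2(1)]] .
        also have "\<mu> w2 \<otimes> \<mu> w1 \<otimes> inv (\<mu> w1) \<otimes> inv (\<mu> w2) = \<one>"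
          using \<mu>c w1 w2 by (simp add: m_assoc)
        finally show ?thesis .
      qed
      ultimately show ?thesis using w1 w2 by blast
    qed
    show "u \<otimes> v = v \<otimes> u"
      using y
    proof
      assume "y \<in> derived H (carrier H)"
      then have "y \<in> generate H (derived_set H (carrier H))" unfolding derived_def .
      then have "\<exists>w \<in> carrier G. h w = y \<and> \<mu> w = \<one>"
      proof (induction rule: generate.induct)
        case one then show ?case using \<mu>1 by (intro bexI[of _ \<one>]) auto
      next
        case (incl z) then show ?case using gen_ok by blast
      next
        case (inv z)
        then obtain w where w: "w \<in> carrier G" "h w = z" "\<mu> w = \<one>" using gen_ok by blast
        then show ?case using \<mu>inv[OF w(1)] by (intro bexI[of _ "inv w"]) auto
      next
        case (eng z1 z2)
        then obtain w1 w2 where "w1 \<in> carrier G" "h w1 = z1" "\<mu> w1 = \<one>"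
          "w2 \<in> carrier G" "h w2 = z2" "\<mu> w2 = \<one>" by blast
        then show ?case using \<mu>_mult by (intro bexI[of _ "w1 \<otimes> w2"]) auto
      qed
      then show ?thesis using good by blast
    next
      assume "\<exists>g \<in> carrier H. y = g [^]\<^bsub>H\<^esub> p"
      then obtain g where g: "g \<in> carrier H" "y = g [^]\<^bsub>H\<^esub> p" by blast
      obtain w0 where w0: "w0 \<in> carrier G" "h w0 = g" using g(1) surj by (metis imageE)
      have \<mu>pow: "\<mu> (w0 [^] n) = \<mu> w0 [^] n" for n::nat
      proof (induction n)
        case 0 then show ?case using \<mu>1 by simp
      next
        case (Suc n) then show ?case using w0 \<mu>_mult by simp
      qed
      have upow: "u [^] n \<otimes> w0 \<otimes> inv (u [^] n) = \<mu> w0 [^] n \<otimes> w0" for n::nat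
      proof (induction n)
        case 0 then show ?case using w0 by simp
      next
        case (Suc n)
        have "u [^] Suc n \<otimes> w0 \<otimes> inv (u [^] Suc n) = u [^] n \<otimes> (u \<otimes> w0 \<otimes> inv u) \<otimes> inv (u [^] n)"
          using u w0 by (simp add: m_assoc inv_mult_group)
        also have "\<dots> = u [^] n \<otimes> (\<mu> w0 \<otimes> w0) \<otimes> inv (u [^] n)" using conj[OF w0(1)] by simp
        also have "\<dots> = (u [^] n \<otimes> \<mu> w0) \<otimes> w0 \<otimes> inv (u [^] n)" using u w0 \<mu>c by (simp add: m_assoc)
        also have "u [^] n \<otimes> \<mu> w0 = \<mu> w0 \<otimes> u [^] n" using centerD[OF \<mu>Z[OF w0(1)], of "u [^] n"] u by simp
        also have "\<mu> w0 \<otimes> u [^] n \<otimes> w0 \<otimes> inv (u [^] n) = \<mu> w0 \<otimes> (u [^] n \<otimes> w0 \<otimes> inv (u [^] n))"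
          using u w0 \<mu>c by (simp add: m_assoc)
        also have "\<dots> = \<mu> w0 \<otimes> (\<mu> w0 [^] n \<otimes> w0)" using Suc by simp
        also have "\<dots> = \<mu> w0 [^] Suc n \<otimes> w0"
        proof -
          have "\<mu> w0 [^] Suc n = \<mu> w0 \<otimes> \<mu> w0 [^] n" using \<mu>c[OF w0(1)] by (rule nat_pow_Suc2)
          then show ?thesis using w0 \<mu>c by (simp add: m_assoc)
        qed
        finally show ?case .
      qed
      have "h (u [^] p) = \<one>\<^bsub>H\<^esub>" using u hu xp by (simp add: hh.hom_nat_pow)
      then have "u [^] p \<in> center_of G" using kerZ u unfolding kernel_def by auto
      then have "u [^] p \<otimes> w0 \<otimes> inv (u [^] p) = w0"
        using centerD[of "u [^] p" w0] w0 u by (simp add: m_assoc)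
      then have "\<mu> w0 [^] p \<otimes> w0 = w0" using upow by simp
      then have "\<mu> w0 [^] p = \<one>" using w0 \<mu>c by (metis l_one nat_pow_closed right_cancel one_closed)
      then have "\<mu> (w0 [^] p) = \<one>" using \<mu>pow by simp
      moreover have "h (w0 [^] p) = y" using g w0 by (simp add: hh.hom_nat_pow)
      ultimately show ?thesis using good w0 by blast
    qed
  qed
qed

end


context group begin

lemma cyclic_sg_iff:
  assumes S: "S \<subseteq> carrier G"
  shows "cyclic_group (subgroup_generated G S) \<longleftrightarrow> (\<exists>c \<in> carrier G. generate G S = generate G {c})"
proof -
  let ?K = "subgroup_generated G S"
  interpret K: group ?K by simp
  have cK: "carrier ?K = generate G S" using S by (simp add: carrier_subgroup_generated Int_absorb1)
  have pw: "range (\<lambda>n::int. c [^]\<^bsub>?K\<^esub> n) = generate G {c}" if c: "c \<in> carrier ?K" "c \<in> carrier G" for c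
  proof -
    have "range (\<lambda>n::int. c [^]\<^bsub>?K\<^esub> n) = range (\<lambda>n::int. c [^] n)"
      using int_pow_subgroup_generated[OF c(1)] by simp
    also have "\<dots> = generate G {c}" using generate_pow[OF c(2)] by auto
    finally show ?thesis .
  qed
  show ?thesis
  proof
    assume "cyclic_group ?K"
    then obtain c where c: "c \<in> carrier ?K" "carrier ?K = range (\<lambda>n::int. c [^]\<^bsub>?K\<^esub> n)"
      using K.cyclic_group by blast
    have cG: "c \<in> carrier G" using c(1) cK generate_incl[OF S] by blast
    show "\<exists>c \<in> carrier G. generate G S = generate G {c}"
      using c cG pw cK by auto
  next
    assume "\<exists>c \<in> carrier G. generate G S = generate G {c}"
    then obtain c where c: "c \<in> carrier G" "generate G S = generate G {c}" by blast
    have cK: "c \<in> carrier ?K" using c cK generate.incl[of c "{c}" G] by simp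
    have "carrier ?K = range (\<lambda>n::int. c [^]\<^bsub>?K\<^esub> n)"
      using pw[OF cK c(1)] c(2) S by (simp add: carrier_subgroup_generated Int_absorb1)
    then show "cyclic_group ?K" using K.cyclic_group cK by blast
  qed
qed

lemma cyclic_lift_commute:
  fixes H :: "('c, 'd) monoid_scheme" and h :: "'a \<Rightarrow> 'c"
  assumes grpH: "group H" and hom: "h \<in> hom G H" and surj: "h ` carrier G = carrier H"
    and kerZ: "kernel G H h \<subseteq> center_of G"
    and x: "x \<in> carrier H" and y: "y \<in> carrier H"
    and cyc: "cyclic_group (subgroup_generated H {x, y})"
  shows "\<forall>u \<in> carrier G. \<forall>v \<in> carrier G. h u = x \<longrightarrow> h v = y \<longrightarrow> u \<otimes> v = v \<otimes> u"
proof -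
  interpret hh: group_hom G H h
    by (rule group_hom.intro[OF is_group grpH]) (simp add: group_hom_axioms_def hom)
  obtain c where c: "c \<in> carrier H" "generate H {x, y} = generate H {c}"
    using hh.H.cyclic_sg_iff[of "{x, y}"] x y cyc by auto
  have "x \<in> generate H {c}" "y \<in> generate H {c}" using c(2) generate.incl[of _ "{x,y}" H] by auto
  then obtain i j :: int where ij: "x = c [^]\<^bsub>H\<^esub> i" "y = c [^]\<^bsub>H\<^esub> j"
    using hh.H.generate_pow[OF c(1)] by auto
  obtain d where d: "d \<in> carrier G" "h d = c" using c(1) surj by (metis imageE)
  have lifts: "\<exists>k \<in> center_of G. v = k \<otimes> w"
    if "v \<in> carrier G" "w \<in> carrier G" "h v = h w" for v w
  proof -
    have "h (v \<otimes> inv w) = \<one>\<^bsub>H\<^esub>" using that by simp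
    then have "v \<otimes> inv w \<in> kernel G H h" using that unfolding kernel_def by simp
    then have "v \<otimes> inv w \<in> center_of G" using kerZ by blast
    moreover have "v = (v \<otimes> inv w) \<otimes> w" using that by (simp add: m_assoc)
    ultimately show ?thesis by blast
  qed
  show ?thesis
  proof (intro ballI impI)
    fix u v assume u: "u \<in> carrier G" and v: "v \<in> carrier G" and hu: "h u = x" and hv: "h v = y"
    have "h (d [^] i) = x" using d ij by (simp add: hh.hom_int_pow)
    then obtain k1 where k1: "k1 \<in> center_of G" "u = k1 \<otimes> d [^] i" using lifts[OF u, of "d [^] i"] d hu by auto
    have "h (d [^] j) = y" using d ij by (simp add: hh.hom_int_pow)
    then obtain k2 where k2: "k2 \<in> center_of G" "v = k2 \<otimes> d [^] j" using lifts[OF v, of "d [^] j"] d hv by auto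
    have k1c: "k1 \<in> carrier G" and k2c: "k2 \<in> carrier G" using k1 k2 centerC by auto
    have dd: "d [^] i \<otimes> d [^] j = d [^] j \<otimes> d [^] i"
      using d by (metis add.commute int_pow_mult)
    have "u \<otimes> v = k1 \<otimes> (d [^] i \<otimes> k2) \<otimes> d [^] j" using k1 k2 k1c k2c d by (simp add: m_assoc)
    also have "d [^] i \<otimes> k2 = k2 \<otimes> d [^] i" using centerD[OF k2(1), of "d [^] i"] d by simp
    also have "k1 \<otimes> (k2 \<otimes> d [^] i) \<otimes> d [^] j = k1 \<otimes> k2 \<otimes> (d [^] i \<otimes> d [^] j)"
      using k1c k2c d by (simp add: m_assoc)
    also note dd
    also have "k1 \<otimes> k2 = k2 \<otimes> k1" using centerD[OF k1(1) k2c] .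
    also have "k2 \<otimes> k1 \<otimes> (d [^] j \<otimes> d [^] i) = k2 \<otimes> (k1 \<otimes> d [^] j) \<otimes> d [^] i"
      using k1c k2c d by (simp add: m_assoc)
    also have "k1 \<otimes> d [^] j = d [^] j \<otimes> k1" using centerD[OF k1(1), of "d [^] j"] d by simp
    also have "k2 \<otimes> (d [^] j \<otimes> k1) \<otimes> d [^] i = v \<otimes> u" using k1 k2 k1c k2c d by (simp add: m_assoc)
    finally show "u \<otimes> v = v \<otimes> u" .
  qed
qed

end


context group begin

lemma nat_pow_mult_assoc:
  "x \<in> carrier G \<Longrightarrow> y \<in> carrier G \<Longrightarrow> x [^] (m::nat) \<otimes> (x [^] (n::nat) \<otimes> y) = x [^] (m + n) \<otimes> y"
  by (simp add: m_assoc[symmetric] nat_pow_mult)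

lemma conj_pow:
  assumes "x \<in> carrier G" "y \<in> carrier G"
  shows "x \<otimes> y [^] (t::nat) \<otimes> inv x = (x \<otimes> y \<otimes> inv x) [^] t"
proof (induction t)
  case 0 then show ?case using assms by simp
next
  case (Suc t)
  have "x \<otimes> y [^] Suc t \<otimes> inv x = (x \<otimes> y [^] t \<otimes> inv x) \<otimes> (x \<otimes> y \<otimes> inv x)"
    using assms by (simp add: m_assoc)
  then show ?case using Suc assms by simp
qed

lemma commute_pow2:
  assumes "x \<in> carrier G" "y \<in> carrier G" "x \<otimes> y = y \<otimes> x"
  shows "x [^] (i::nat) \<otimes> y [^] (j::nat) = y [^] j \<otimes> x [^] i"
proof -
  have "x [^] i \<otimes> y = y \<otimes> x [^] i" using group_commutes_pow assms by blast
  then have "y \<otimes> x [^] i = x [^] i \<otimes> y" by simp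
  then have "y [^] j \<otimes> x [^] i = x [^] i \<otimes> y [^] j" using group_commutes_pow assms by blast
  then show ?thesis by simp
qed

lemma pow_mod_ord: "a \<in> carrier G \<Longrightarrow> a [^] (s::nat) = a [^] (s mod ord a)"
proof -
  assume a: "a \<in> carrier G"
  have "a [^] s = a [^] (ord a * (s div ord a) + s mod ord a)" by simp
  also have "\<dots> = a [^] (ord a * (s div ord a)) \<otimes> a [^] (s mod ord a)"
    using a by (simp add: nat_pow_mult)
  also have "a [^] (ord a * (s div ord a)) = \<one>"
    using a by (simp add: nat_pow_pow[symmetric])
  finally show ?thesis using a by simp
qed

lemma cyclic_p_elems:
  assumes a: "a \<in> carrier G" and oa: "ord a = p ^ Suc m" and pr: "Factorial_Ring.prime p"
    and w: "w \<in> generate G {a}" and wp: "w [^] p = \<one>"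
  shows "\<exists>i::nat. w = (a [^] (p ^ m)) [^] i"
proof -
  have p0: "p > 0" using pr prime_gt_0_nat by blast
  have o0: "ord a \<noteq> 0" using oa p0 by simp
  obtain i where i: "w = a [^] (i::nat)" using w generate_pow_nat[OF a o0] by blast
  have "a [^] (i * p) = \<one>" using wp i a by (simp add: nat_pow_pow)
  then have "p ^ Suc m dvd i * p" using pow_eq_id[OF a] oa by simp
  then have "p ^ m dvd i" using p0 by (simp add: mult.commute)
  then obtain q where "i = p ^ m * q" by blast
  then have "w = (a [^] (p ^ m)) [^] q" using i a by (simp add: nat_pow_pow)
  then show ?thesis by blast
qed

lemma pow_formula:
  assumes a: "a \<in> carrier G" and b: "b \<in> carrier G" and d: "d \<in> carrier G"
    and ba: "b \<otimes> a = d \<otimes> a \<otimes> b" and da: "d \<otimes> a = a \<otimes> d" and db: "d \<otimes> b = b \<otimes> d"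
  shows "(a [^] (k::nat) \<otimes> b) [^] (j::nat) = d [^] (k * (j * (j - 1) div 2)) \<otimes> a [^] (k * j) \<otimes> b [^] j"
proof -
  have dak: "d [^] (i::nat) \<otimes> a [^] (l::nat) = a [^] l \<otimes> d [^] i" for i l
    using commute_pow2[OF d a da] .
  have dbk: "d [^] (i::nat) \<otimes> b [^] (l::nat) = b [^] l \<otimes> d [^] i" for i l
    using commute_pow2[OF d b db] .
  have b1: "b \<otimes> a [^] (l::nat) = d [^] l \<otimes> a [^] l \<otimes> b" for l
  proof (induction l)
    case 0 then show ?case using b by simp
  next
    case (Suc l)
    have "b \<otimes> a [^] Suc l = (b \<otimes> a [^] l) \<otimes> a" using a b by (simp add: m_assoc)
    also have "\<dots> = d [^] l \<otimes> a [^] l \<otimes> (b \<otimes> a)" using Suc a b d by (simp add: m_assoc)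
    also have "\<dots> = d [^] l \<otimes> (a [^] l \<otimes> d) \<otimes> a \<otimes> b" using ba a b d by (simp add: m_assoc)
    also have "a [^] l \<otimes> d = d \<otimes> a [^] l" using dak[of 1 l] d a by simp
    also have "d [^] l \<otimes> (d \<otimes> a [^] l) \<otimes> a \<otimes> b = d [^] Suc l \<otimes> a [^] Suc l \<otimes> b"
      using a b d by (simp add: m_assoc)
    finally show ?case .
  qed
  have bj: "b [^] (j::nat) \<otimes> a [^] (l::nat) = d [^] (l * j) \<otimes> a [^] l \<otimes> b [^] j" for j l
  proof (induction j)
    case 0 then show ?case using a by simp
  next
    case (Suc j)
    have "b [^] Suc j \<otimes> a [^] l = b [^] j \<otimes> (b \<otimes> a [^] l)" using a b by (simp add: m_assoc)
    also have "\<dots> = b [^] j \<otimes> d [^] l \<otimes> a [^] l \<otimes> b" using b1 a b d by (simp add: m_assoc)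
    also have "b [^] j \<otimes> d [^] l = d [^] l \<otimes> b [^] j" using dbk[of l j] by simp
    also have "d [^] l \<otimes> b [^] j \<otimes> a [^] l \<otimes> b = d [^] l \<otimes> (b [^] j \<otimes> a [^] l) \<otimes> b"
      using a b d by (simp add: m_assoc)
    also have "\<dots> = d [^] l \<otimes> (d [^] (l * j) \<otimes> a [^] l \<otimes> b [^] j) \<otimes> b" using Suc by simp
    also have "\<dots> = (d [^] l \<otimes> d [^] (l * j)) \<otimes> a [^] l \<otimes> (b [^] j \<otimes> b)"
      using a b d by (simp add: m_assoc)
    also have "d [^] l \<otimes> d [^] (l * j) = d [^] (l * Suc j)" using d by (simp add: nat_pow_mult)
    also have "b [^] j \<otimes> b = b [^] Suc j" by simp
    finally show ?case .
  qed
  show ?thesis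
  proof (induction j)
    case 0 then show ?case using b by simp
  next
    case (Suc j)
    have T: "k * (Suc j * (Suc j - 1) div 2) = k * (j * (j - 1) div 2) + k * j"
    proof -
      have "Suc j * (Suc j - 1) div 2 = j * (j - 1) div 2 + j"
        by (cases j) (auto simp: algebra_simps)
      then show ?thesis by (simp add: algebra_simps)
    qed
    have "(a [^] k \<otimes> b) [^] Suc j = (d [^] (k * (j * (j - 1) div 2)) \<otimes> a [^] (k * j) \<otimes> b [^] j) \<otimes> (a [^] k \<otimes> b)"
      using Suc by simp
    also have "\<dots> = d [^] (k * (j * (j - 1) div 2)) \<otimes> a [^] (k * j) \<otimes> (b [^] j \<otimes> a [^] k) \<otimes> b"
      using a b d by (simp add: m_assoc)
    also have "\<dots> = d [^] (k * (j * (j - 1) div 2)) \<otimes> (a [^] (k * j) \<otimes> d [^] (k * j)) \<otimes> a [^] k \<otimes> b [^] j \<otimes> b"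
      using bj[of j k] a b d by (simp add: m_assoc)
    also have "a [^] (k * j) \<otimes> d [^] (k * j) = d [^] (k * j) \<otimes> a [^] (k * j)" using dak by simp
    also have "d [^] (k * (j * (j - 1) div 2)) \<otimes> (d [^] (k * j) \<otimes> a [^] (k * j)) \<otimes> a [^] k \<otimes> b [^] j \<otimes> b
        = d [^] (k * (j * (j - 1) div 2) + k * j) \<otimes> a [^] (k * j + k) \<otimes> b [^] Suc j"
      using a b d by (simp add: m_assoc nat_pow_mult nat_pow_mult_assoc)
    also have "\<dots> = d [^] (k * (Suc j * (Suc j - 1) div 2)) \<otimes> a [^] (k * Suc j) \<otimes> b [^] Suc j"
      using T by (simp add: algebra_simps)
    finally show ?case .
  qed
qed

end


context group begin

lemma B_core:
  assumes pr: "Factorial_Ring.prime p"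
    and a: "a \<in> carrier G" and b: "b \<in> carrier G" and oa: "ord a = p ^ n" and n1: "n \<ge> 1"
    and bp: "b [^] p = a [^] (p * s')" and slt: "s' < p ^ (n - 1)"
    and comm: "a [^] p \<otimes> b = b \<otimes> a [^] p"
    and conjM: "b \<otimes> a \<otimes> inv b \<in> generate G {a}"
    and noP: "\<And>k::nat. (a [^] k \<otimes> b) [^] p \<noteq> \<one>"
  shows "p = 2 \<and> n = 2 \<and> b \<otimes> a \<otimes> inv b = a [^] (3::nat) \<and> b [^] (2::nat) = a [^] (2::nat)"
proof -
  have p1: "p > 1" using pr prime_gt_1_nat by blast
  have o0: "ord a \<noteq> 0" using oa p1 by simp
  have aS: "{a} \<subseteq> carrier G" using a by simp
  have n2: "n \<ge> 2"
  proof (rule ccontr)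
    assume "\<not> n \<ge> 2"
    then have "n = 1" using n1 by simp
    then have "s' = 0" using slt by simp
    then have "(a [^] (0::nat) \<otimes> b) [^] p = \<one>" using bp b by simp
    then show False using noP by blast
  qed
  then obtain m where m: "n = Suc (Suc m)" by (metis add_2_eq_Suc le_Suc_ex)
  define d where "d = b \<otimes> a \<otimes> inv b \<otimes> inv a"
  have dM: "d \<in> generate G {a}"
    unfolding d_def using conjM generate_m_inv_closed[OF aS generate.incl[of a "{a}" G]]
    by (simp add: generate.eng)
  have dc: "d \<in> carrier G" using dM generate_incl[OF aS] by blast
  have dA: "d \<otimes> a = b \<otimes> a \<otimes> inv b" unfolding d_def using a b by (simp add: m_assoc)
  obtain i0 where i0: "d = a [^] (i0::nat)" using dM generate_pow_nat[OF a o0] by blast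
  have da: "d \<otimes> a = a \<otimes> d" using i0 a by (simp add: nat_pow_Suc2[symmetric])
  have "(b \<otimes> a \<otimes> inv b) [^] p = b \<otimes> a [^] p \<otimes> inv b" using conj_pow[OF b a] by simp
  also have "\<dots> = (a [^] p \<otimes> b) \<otimes> inv b" using comm by simp
  also have "\<dots> = a [^] p" using a b by (simp add: m_assoc)
  finally have "(d \<otimes> a) [^] p = a [^] p" using dA by simp
  then have "d [^] p \<otimes> a [^] p = a [^] p" using pow_mult_distrib[OF da dc a] by simp
  then have dp: "d [^] p = \<one>" using dc a by (metis l_one nat_pow_closed one_closed right_cancel)
  have oa': "ord a = p ^ Suc (Suc m)" using oa m by simp
  obtain i where i: "d = (a [^] (p ^ Suc m)) [^] (i::nat)"
    using cyclic_p_elems[OF a oa' pr dM dp] by blast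
  have dpow: "d = (a [^] p) [^] (p ^ m * i)" using i a by (simp add: nat_pow_pow mult.assoc)
  have db: "d \<otimes> b = b \<otimes> d"
    using commute_pow2[OF nat_pow_closed[OF a] b comm, of "p ^ m * i" 1] dpow b by simp
  have ba: "b \<otimes> a = d \<otimes> a \<otimes> b" using dA a b dc by (simp add: m_assoc)
  have PF: "(a [^] (k::nat) \<otimes> b) [^] p = d [^] (k * (p * (p - 1) div 2)) \<otimes> a [^] (k * p) \<otimes> b [^] p" for k
    using pow_formula[OF a b dc ba da db] by simp
  define k0 where "k0 = p ^ (n - 1) - s'"
  have "k0 * p + p * s' = p ^ n"
  proof -
    obtain n' where n': "n = Suc n'" using n1 by (cases n) auto
    have le: "s' * p \<le> p ^ n' * p" using slt n' by simp
    have "k0 * p = p ^ n' * p - s' * p" unfolding k0_def using n' by (simp add: diff_mult_distrib)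
    then show ?thesis using le n' by (simp add: mult.commute)
  qed
  moreover have "a [^] (p ^ n) = \<one>" using pow_ord_eq_1[OF a] oa by simp
  ultimately have ak0: "a [^] (k0 * p) \<otimes> b [^] p = \<one>" using bp a by (simp add: nat_pow_mult)
  have "(a [^] k0 \<otimes> b) [^] p = d [^] (k0 * (p * (p - 1) div 2)) \<otimes> (a [^] (k0 * p) \<otimes> b [^] p)"
    using PF a b dc by (simp add: m_assoc)
  then have k0eq: "(a [^] k0 \<otimes> b) [^] p = d [^] (k0 * (p * (p - 1) div 2))" using ak0 dc by simp
  have d1: "d \<noteq> \<one>"
  proof
    assume "d = \<one>"
    then show False using k0eq noP by simp
  qed
  have p2: "p = 2"
  proof (rule ccontr)
    assume "p \<noteq> 2"
    then have "p > 2" using p1 by simp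
    then have "odd p" using pr prime_odd_nat by blast
    then have "p * (p - 1) div 2 = p * ((p - 1) div 2)" by (simp add: div_mult_swap)
    then have "d [^] (k0 * (p * (p - 1) div 2)) = (d [^] p) [^] (k0 * ((p - 1) div 2))"
      using dc by (simp add: nat_pow_pow algebra_simps)
    then show False using k0eq noP dp by simp
  qed
  define e where "e = a [^] ((2::nat) ^ Suc m)"
  have ec: "e \<in> carrier G" unfolding e_def using a by simp
  have e2: "e [^] (2::nat) = \<one>"
  proof -
    have "e [^] (2::nat) = a [^] ord a" unfolding e_def using a oa' p2 by (simp add: nat_pow_pow)
    then show ?thesis using a by simp
  qed
  have de: "d = e [^] i" using i p2 e_def by simp
  have "e [^] i = e [^] (2 * (i div 2) + i mod 2)" by simp
  also have "\<dots> = e [^] (2 * (i div 2)) \<otimes> e [^] (i mod 2)" by (rule nat_pow_mult[symmetric, OF ec])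
  also have "e [^] (2 * (i div 2)) = \<one>" using ec e2 by (simp only: nat_pow_pow[symmetric]) simp
  finally have "d = e [^] (i mod 2)" using de ec by simp
  then have de': "d = e"
  proof (cases "i mod 2 = 0")
    case True
    then show ?thesis using \<open>d = e [^] (i mod 2)\<close> d1 by simp
  next
    case False
    then have "i mod 2 = 1" by simp
    then show ?thesis using \<open>d = e [^] (i mod 2)\<close> ec by simp
  qed
  have PF2: "(a [^] (k::nat) \<otimes> b) [^] (2::nat) = e [^] k \<otimes> a [^] (2 * k) \<otimes> b [^] (2::nat)" for k
    using PF[of k] p2 de' by (simp add: mult.commute)
  have bp2: "b [^] (2::nat) = a [^] (2 * s')" using bp p2 by simp
  show ?thesis
  proof (cases m)
    case (Suc m')
    define Xn where "Xn = (2::nat) ^ m'"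
    have oaX: "ord a = 8 * Xn" using oa' p2 Suc Xn_def by simp
    have eX: "e = a [^] (4 * Xn)" unfolding e_def Xn_def Suc by simp
    have sX: "s' < 4 * Xn" using slt m p2 Suc Xn_def by simp
    define r where "r = 4 * Xn - s'"
    have rs: "r + s' = 4 * Xn" unfolding r_def using sX by simp
    define k1 where "k1 = r * (1 + 2 * Xn)"
    define En where "En = 4 * Xn * k1 + 2 * k1 + 2 * s'"
    have ring: "(4 * Xn * k1 + 2 * k1) = 2 * r + 8 * r * Xn + 8 * r * Xn * Xn"
      unfolding k1_def by (simp add: algebra_simps)
    have EQ: "En = 8 * Xn * (1 + r + r * Xn)"
    proof -
      have "En = 2 * r + 8 * r * Xn + 8 * r * Xn * Xn + 2 * s'" unfolding En_def using ring by simp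
      also have "\<dots> = 2 * (r + s') + 8 * r * Xn + 8 * r * Xn * Xn" by simp
      also have "\<dots> = 8 * Xn * (1 + r + r * Xn)" using rs by (simp add: algebra_simps)
      finally show ?thesis .
    qed
    have "(a [^] k1 \<otimes> b) [^] (2::nat) = a [^] (4 * Xn * k1) \<otimes> a [^] (2 * k1) \<otimes> a [^] (2 * s')"
      using PF2[of k1] eX bp2 a by (simp add: nat_pow_pow)
    also have "\<dots> = a [^] En" unfolding En_def using a by (simp add: nat_pow_mult)
    also have "\<dots> = (a [^] ord a) [^] (1 + r + r * Xn)" unfolding EQ oaX using a by (simp only: nat_pow_pow)
    also have "\<dots> = \<one>" using a by simp
    finally have "(a [^] k1 \<otimes> b) [^] p = \<one>" using p2 by simp
    then show ?thesis using noP by blast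
  next
    case 0
    have n2': "n = 2" using m 0 by simp
    have oa4: "ord a = 4" using oa n2' p2 by simp
    have e2': "e = a [^] (2::nat)" unfolding e_def 0 by simp
    have "b \<otimes> a \<otimes> inv b = a [^] (2::nat) \<otimes> a" using dA de' e2' by simp
    also have "\<dots> = a [^] (3::nat)" using a by (simp add: numeral_3_eq_3 numeral_2_eq_2)
    finally have conj3: "b \<otimes> a \<otimes> inv b = a [^] (3::nat)" .
    have "s' < 2" using slt n2' p2 by simp
    moreover have "s' \<noteq> 0"
    proof
      assume "s' = 0"
      then have "(a [^] (0::nat) \<otimes> b) [^] p = \<one>" using bp b by simp
      then show False using noP by blast
    qed
    ultimately have "s' = 1" by simp
    then have "b [^] (2::nat) = a [^] (2::nat)" using bp2 by simp
    then show ?thesis using p2 n2' conj3 by simp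
  qed
qed

end


context group begin

lemma subgroup_card_ppow:
  assumes o: "order G = p ^ k" and pr: "Factorial_Ring.prime p" and K: "subgroup K G"
  shows "\<exists>j. card K = p ^ j"
proof -
  have "card K dvd order G" using lagrange[OF K] by (metis dvd_triv_right)
  then show ?thesis using o divides_primepow_nat[OF pr] by auto
qed

lemma normalizer_step:
  assumes fin: "finite (carrier G)" and o: "order G = p ^ k" and pr: "Factorial_Ring.prime p"
    and K: "subgroup K G" and M: "subgroup M G" and MK: "M \<subseteq> K" "M \<noteq> K" and a: "a \<in> M"
  shows "\<exists>x \<in> K. x \<notin> M \<and> x \<otimes> a \<otimes> inv x \<in> M"
proof -
  have p1: "p > 1" using pr prime_gt_1_nat by blast
  have Kc: "K \<subseteq> carrier G" using K subgroup.subset by blast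
  have Mc: "M \<subseteq> carrier G" using M subgroup.subset by blast
  have finK: "finite K" using fin Kc finite_subset by blast
  have finM: "finite M" using fin Mc finite_subset by blast
  let ?Mg = "G\<lparr>carrier := M\<rparr>"
  have grpM: "group ?Mg" using subgroup.subgroup_is_group[OF M is_group] .
  obtain n where n: "card M = p ^ n" using subgroup_card_ppow[OF o pr M] by blast
  obtain j where j: "card K = p ^ j" using subgroup_card_ppow[OF o pr K] by blast
  have oM: "order ?Mg = p ^ n" using n by (simp add: order_def)
  let ?E = "{M #> y | y. y \<in> K}"
  have finE: "finite ?E" using finK by simp
  let ?\<phi> = "\<lambda>m C. C #> inv m"
  have Esub: "C \<subseteq> carrier G" if "C \<in> ?E" for C
    using that Mc Kc by (auto simp: r_coset_def)
  have fix_mod: "card ?E mod p = card {C \<in> ?E. \<forall>m \<in> carrier ?Mg. ?\<phi> m C = C} mod p"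
  proof (rule fixpoints_mod[OF grpM _ oM pr finE])
    show "finite (carrier ?Mg)" using finM by simp
    show "?\<phi> m C \<in> ?E" if mM: "m \<in> carrier ?Mg" and CE: "C \<in> ?E" for m C
    proof -
      obtain y where y: "y \<in> K" "C = M #> y" using CE by blast
      have mM': "m \<in> M" using mM by simp
      have "inv m \<in> M" by (rule subgroup.m_inv_closed[OF M mM'])
      then have mK: "inv m \<in> K" using MK(1) by blast
      have yc: "y \<in> carrier G" using y Kc by blast
      have mc: "inv m \<in> carrier G" using mK Kc by blast
      have eq: "C #> inv m = M #> (y \<otimes> inv m)"
        unfolding y(2) by (rule coset_mult_assoc[OF Mc yc mc])
      have yk: "y \<otimes> inv m \<in> K" by (rule subgroup.m_closed[OF K y(1) mK])
      show ?thesis unfolding mem_Collect_eq by (intro exI[of _ "y \<otimes> inv m"] conjI eq yk)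
    qed
    show "?\<phi> \<one>\<^bsub>?Mg\<^esub> C = C" if CE: "C \<in> ?E" for C
    proof -
      have "inv \<one>\<^bsub>?Mg\<^esub> = \<one>" by simp
      then show ?thesis using coset_mult_one[OF Esub[OF CE]] by simp
    qed
    show "?\<phi> (m1 \<otimes>\<^bsub>?Mg\<^esub> m2) C = ?\<phi> m1 (?\<phi> m2 C)"
      if "m1 \<in> carrier ?Mg" "m2 \<in> carrier ?Mg" "C \<in> ?E" for m1 m2 C
    proof -
      have m12: "m1 \<in> carrier G" "m2 \<in> carrier G" using that Mc by auto
      have "C #> inv m2 #> inv m1 = C #> (inv m2 \<otimes> inv m1)"
        by (rule coset_mult_assoc) (use Esub[OF that(3)] m12 in auto)
      then show ?thesis using m12 by (simp add: inv_mult_group)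
    qed
  qed
  let ?Kg = "G\<lparr>carrier := K\<rparr>"
  have grpK: "group ?Kg" using subgroup.subgroup_is_group[OF K is_group] .
  have MsubK: "subgroup M ?Kg" using subgroup_incl[OF M K MK(1)] .
  have "card (rcosets\<^bsub>?Kg\<^esub> M) * card M = order ?Kg" using group.lagrange[OF grpK MsubK] .
  moreover have "rcosets\<^bsub>?Kg\<^esub> M = ?E" unfolding RCOSETS_def r_coset_def by auto
  ultimately have cE: "card ?E * p ^ n = p ^ j" using n j by (simp add: order_def)
  have "card M < card K" using MK finK by (simp add: psubset_card_mono)
  then have "n < j" using n j p1 by simp
  then have "p ^ j = p ^ (j - n) * p ^ n" by (simp add: power_add[symmetric])
  then have "card ?E * p ^ n = p ^ (j - n) * p ^ n" using cE by simp
  then have "card ?E = p ^ (j - n)" using p1 by simp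
  then have "card ?E mod p = 0" using \<open>n < j\<close> by simp
  then have cF: "card {C \<in> ?E. \<forall>m \<in> carrier ?Mg. ?\<phi> m C = C} mod p = 0" using fix_mod by simp
  have ME: "M \<in> {C \<in> ?E. \<forall>m \<in> carrier ?Mg. ?\<phi> m C = C}"
  proof -
    have "M = M #> \<one>" using Mc by simp
    moreover have "\<one> \<in> K" using K subgroup.one_closed by blast
    ultimately have "M \<in> ?E" by blast
    moreover have "M #> inv m = M" if "m \<in> M" for m
      using coset_join2[of "inv m" M] that M Mc subgroup.m_inv_closed[OF M] by auto
    ultimately show ?thesis by simp
  qed
  have "\<exists>C \<in> {C \<in> ?E. \<forall>m \<in> carrier ?Mg. ?\<phi> m C = C}. C \<noteq> M"
  proof (rule ccontr)
    assume "\<not> ?thesis"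
    then have "{C \<in> ?E. \<forall>m \<in> carrier ?Mg. ?\<phi> m C = C} = {M}" using ME by blast
    then show False using cF p1 by simp
  qed
  then obtain y where y: "y \<in> K" "M #> y \<noteq> M" and fx: "\<forall>m \<in> M. (M #> y) #> inv m = M #> y" by auto
  have yc: "y \<in> carrier G" using y Kc by blast
  have ac: "a \<in> carrier G" using a Mc by blast
  have yM: "y \<notin> M"
  proof
    assume "y \<in> M"
    then have "M #> y = M" by (rule coset_join2[OF yc M])
    then show False using y(2) by simp
  qed
  have "inv a \<in> M" by (rule subgroup.m_inv_closed[OF M a])
  then have "(M #> y) #> inv (inv a) = M #> y" using fx by blast
  then have "(M #> y) #> a = M #> y" using ac by simp
  then have eq: "M #> (y \<otimes> a) = M #> y" using coset_mult_assoc[OF Mc yc ac] by simp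
  have "y \<otimes> a \<in> M #> (y \<otimes> a)" by (rule rcos_self[OF m_closed[OF yc ac] M])
  then have "y \<otimes> a \<in> M #> y" using eq by simp
  then obtain m where m: "m \<in> M" "y \<otimes> a = m \<otimes> y" unfolding r_coset_def by blast
  have mc: "m \<in> carrier G" using m(1) Mc by blast
  have "y \<otimes> a \<otimes> inv y = m \<otimes> y \<otimes> inv y" using m(2) by simp
  also have "\<dots> = m" using mc yc by (simp add: m_assoc)
  finally have "y \<otimes> a \<otimes> inv y \<in> M" using m(1) by simp
  then show ?thesis using yM y(1) by blast
qed

end


context group begin

lemma unique_p_Q8:
  assumes fin: "finite (carrier G)" and o: "order G = p ^ k" and pr: "Factorial_Ring.prime p"
    and H: "subgroup H G" and ncyc: "\<not> (\<exists>c \<in> carrier G. H = generate G {c})"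
    and z0: "z0 \<in> carrier G" and oz: "ord z0 = p"
    and uniq: "\<And>w. w \<in> H \<Longrightarrow> w [^] p = \<one> \<Longrightarrow> w \<in> generate G {z0}"
  shows "\<exists>a \<in> H. \<exists>b \<in> H. p = 2 \<and> ord a = 4 \<and> b \<otimes> a \<otimes> inv b = a [^] (3::nat)
           \<and> b [^] (2::nat) = a [^] (2::nat) \<and> b \<notin> generate G {a}"
proof -
  have p1: "p > 1" using pr prime_gt_1_nat by blast
  define P where "P K \<longleftrightarrow> subgroup K G \<and> K \<subseteq> H \<and> \<not> (\<exists>c \<in> carrier G. K = generate G {c})" for K
  have PH: "P H" unfolding P_def using H ncyc by blast
  obtain K where PK: "P K" and minK: "\<And>K'. P K' \<Longrightarrow> card K \<le> card K'"
    using ex_has_least_nat[of P H card] PH by blast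
  have K: "subgroup K G" and KH: "K \<subseteq> H" and Kncyc: "\<not> (\<exists>c \<in> carrier G. K = generate G {c})"
    using PK unfolding P_def by auto
  have Kc: "K \<subseteq> carrier G" using K subgroup.subset by blast
  have finK: "finite K" using fin Kc finite_subset by blast
  have small_cyc: "\<exists>c \<in> carrier G. L = generate G {c}"
    if L: "subgroup L G" "L \<subseteq> K" "card L < card K" for L
  proof (rule ccontr)
    assume "\<not> ?thesis"
    then have "P L" unfolding P_def using L KH by blast
    then have "card K \<le> card L" by (rule minK)
    then show False using L(3) by simp
  qed
  have oneK: "\<one> \<in> K" using K subgroup.one_closed by blast
  obtain a where aK: "a \<in> K" and amax: "\<And>y. y \<in> K \<Longrightarrow> ord y \<le> ord a"
  proof -
    have ne: "ord ` K \<noteq> {}" using oneK by blast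
    have fi: "finite (ord ` K)" using finK by simp
    have "Max (ord ` K) \<in> ord ` K" by (rule Max_in[OF fi ne])
    then obtain a where "a \<in> K" "ord a = Max (ord ` K)" by force
    moreover have "ord y \<le> Max (ord ` K)" if "y \<in> K" for y using that finK by simp
    ultimately show ?thesis using that by metis
  qed
  have ac: "a \<in> carrier G" using aK Kc by blast
  define M where "M = generate G {a}"
  have M: "subgroup M G" unfolding M_def using ac by (intro generate_is_subgroup) auto
  have MK: "M \<subseteq> K" unfolding M_def using aK K by (intro generate_subgroup_incl) auto
  have aM: "a \<in> M" unfolding M_def by (rule generate.incl) simp
  have MneK: "M \<noteq> K" using Kncyc ac unfolding M_def by blast
  have cardM: "card M = ord a" unfolding M_def using generate_pow_card[OF ac] by simp
  have McK: "card M < card K" using MK MneK finK by (simp add: psubset_card_mono)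
  obtain n where oa: "ord a = p ^ n" using ord_primepow[OF fin o pr ac] by blast
  have n1: "n \<ge> 1"
  proof (rule ccontr)
    assume "\<not> n \<ge> 1"
    then have "ord a = 1" using oa by simp
    then have "\<forall>y \<in> K. y = \<one>"
      using amax Kc ord_eq_1 ord_ge_1[OF fin] by (metis le_antisym subsetD)
    then have "K = {\<one>}" using oneK by blast
    then have "K = generate G {\<one>}" by (simp add: generate_one)
    then show False using Kncyc by blast
  qed
  have o0: "ord a \<noteq> 0" using oa p1 by simp
  have Mpow: "\<exists>t::nat. m = a [^] t" if "m \<in> M" for m
    using that generate_pow_nat[OF ac o0] unfolding M_def by blast
  obtain x where xK: "x \<in> K" and xM: "x \<notin> M" and xconj: "x \<otimes> a \<otimes> inv x \<in> M"
    using normalizer_step[OF fin o pr K M MK MneK aM] by blast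
  have xc: "x \<in> carrier G" using xK Kc by blast
  have conjx: "x \<otimes> m \<otimes> inv x \<in> M" if m: "m \<in> M" for m
  proof -
    obtain t where t: "m = a [^] (t::nat)" using Mpow[OF m] by blast
    have "x \<otimes> m \<otimes> inv x = (x \<otimes> a \<otimes> inv x) [^] t" using conj_pow[OF xc ac] t by simp
    then show ?thesis using subgroup_nat_pow_closed[OF M xconj] by simp
  qed
  have iter: "x [^] e \<otimes> m \<otimes> inv (x [^] e) \<in> M" if m: "m \<in> M" for e :: nat and m
    using m
  proof (induction e arbitrary: m)
    case 0
    have "m \<in> carrier G" using 0 subgroup.subset[OF M] by blast
    then show ?case using 0 by simp
  next
    case (Suc e)
    have mc: "m \<in> carrier G" using Suc.prems subgroup.subset[OF M] by blast
    have "x [^] Suc e \<otimes> m \<otimes> inv (x [^] Suc e) = x [^] e \<otimes> (x \<otimes> m \<otimes> inv x) \<otimes> inv (x [^] e)"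
      using xc mc by (simp add: m_assoc inv_mult_group)
    then show ?case using Suc.IH[OF conjx[OF Suc.prems]] by simp
  qed
  obtain ex where ox: "ord x = p ^ ex" using ord_primepow[OF fin o pr xc] by blast
  have ex1: "\<exists>t. x [^] (p ^ t) \<in> M"
  proof -
    have "x [^] (p ^ ex) = \<one>" using ox pow_ord_eq_1[OF xc] by simp
    then show ?thesis using subgroup.one_closed[OF M] by metis
  qed
  define t where "t = (LEAST t. x [^] (p ^ t) \<in> M)"
  have tM: "x [^] (p ^ t) \<in> M" unfolding t_def by (rule LeastI_ex[OF ex1])
  have t0: "t \<noteq> 0"
  proof
    assume "t = 0"
    then have "x [^] (1::nat) \<in> M" using tM by simp
    then show False using xM xc by simp
  qed
  define b where "b = x [^] (p ^ (t - 1))"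
  have bc: "b \<in> carrier G" unfolding b_def using xc by simp
  have bK: "b \<in> K" unfolding b_def by (rule subgroup_nat_pow_closed[OF K xK])
  have bM: "b \<notin> M"
  proof
    assume "b \<in> M"
    then have "x [^] (p ^ (t - 1)) \<in> M" unfolding b_def .
    moreover have "t - 1 < t" using t0 by simp
    ultimately show False using not_less_Least[of "t - 1" "\<lambda>t. x [^] (p ^ t) \<in> M"] unfolding t_def by blast
  qed
  have bpM: "b [^] p \<in> M"
  proof -
    obtain t' where t': "t = Suc t'" using t0 by (cases t) auto
    have "b [^] p = x [^] (p ^ t' * p)" unfolding b_def t' using nat_pow_pow[OF xc] by simp
    also have "p ^ t' * p = p ^ t" unfolding t' by (simp add: power_Suc2)
    finally show ?thesis using tM by simp
  qed
  have bconj: "b \<otimes> a \<otimes> inv b \<in> M" unfolding b_def by (rule iter[OF aM])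
  obtain s0 where s0: "b [^] p = a [^] (s0::nat)" using Mpow[OF bpM] by blast
  define s where "s = s0 mod ord a"
  have bps: "b [^] p = a [^] s" unfolding s_def using s0 pow_mod_ord[OF ac] by simp
  have slt: "s < p ^ n" unfolding s_def using oa o0 by simp
  have ps: "p dvd s"
  proof (rule ccontr)
    assume nd: "\<not> p dvd s"
    have "coprime s (p ^ n)" using prime_imp_power_coprime_nat[OF pr nd] .
    then have "gcd (ord a) s = 1" using oa by (simp add: coprime_iff_gcd_eq_1 gcd.commute)
    then have "a [^] (1::nat) \<in> generate G {a [^] s}" using pow_in_generate_gcd[OF ac, of s 1] by simp
    then have aB: "a \<in> generate G {b [^] p}" using ac bps by simp
    have Bsub: "subgroup (generate G {b}) G" using bc by (intro generate_is_subgroup) auto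
    have bB: "b \<in> generate G {b}" by (rule generate.incl) simp
    have "b [^] p \<in> generate G {b}" using gen_nat_pow_closed[of "{b}" b p] bc bB by simp
    then have "generate G {b [^] p} \<subseteq> generate G {b}" using Bsub by (intro generate_subgroup_incl) auto
    then have "a \<in> generate G {b}" using aB by blast
    then have MB: "M \<subseteq> generate G {b}" unfolding M_def using Bsub by (intro generate_subgroup_incl) auto
    have "M \<noteq> generate G {b}" using bB bM by blast
    moreover have "finite (generate G {b})" using fin generate_incl[of "{b}"] bc finite_subset by blast
    ultimately have "card M < card (generate G {b})" using MB by (simp add: psubset_card_mono)
    then have "ord a < ord b" using cardM generate_pow_card[OF bc] by simp
    then show False using amax[OF bK] by simp
  qed
  then obtain s' where s': "s = p * s'" by blast
  have slt': "s' < p ^ (n - 1)"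
  proof -
    obtain n' where n': "n = Suc n'" using n1 by (cases n) auto
    have "p * s' < p * p ^ n'" using slt s' n' by simp
    then show ?thesis using n' by simp
  qed
  have bp: "b [^] p = a [^] (p * s')" using bps s' by simp
  have apc: "a [^] p \<in> carrier G" using ac by simp
  define A where "A = generate G {a [^] p}"
  have Asub: "subgroup A G" unfolding A_def using apc by (intro generate_is_subgroup) auto
  have apA: "a [^] p \<in> A" unfolding A_def by (rule generate.incl) simp
  have Ac: "A \<subseteq> carrier G" using Asub subgroup.subset by blast
  have pdvd: "p dvd ord a" using oa n1 by (simp add: dvd_power)
  have oap: "ord (a [^] p) = p ^ (n - 1)"
  proof -
    have "ord (a [^] p) = ord a div p" using ord_pow[OF ac pdvd] p1 by simp
    also have "\<dots> = p ^ (n - 1)" using oa n1 p1 by (simp add: power_diff)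
    finally show ?thesis .
  qed
  have cardA: "card A = p ^ (n - 1)" unfolding A_def using generate_pow_card[OF apc] oap by simp
  have o0': "ord (a [^] p) \<noteq> 0" using oap p1 by simp
  have Apow: "\<exists>t::nat. g = (a [^] p) [^] t" if "g \<in> A" for g
    using that generate_pow_nat[OF apc o0'] unfolding A_def by blast
  have apAn: "(a [^] p) [^] (q::nat) \<in> A" for q by (rule subgroup_nat_pow_closed[OF Asub apA])
  obtain mm where mm: "b \<otimes> a \<otimes> inv b = a [^] (mm::nat)" using Mpow[OF bconj] by blast
  have bA: "b \<otimes> g \<otimes> inv b \<in> A" if g: "g \<in> A" for g
  proof -
    obtain t where t: "g = (a [^] p) [^] (t::nat)" using Apow[OF g] by blast
    have "b \<otimes> a [^] p \<otimes> inv b = (b \<otimes> a \<otimes> inv b) [^] p" by (rule conj_pow[OF bc ac])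
    also have "\<dots> = (a [^] p) [^] mm" using mm ac by (simp add: nat_pow_pow mult.commute)
    finally have e1: "b \<otimes> a [^] p \<otimes> inv b = (a [^] p) [^] mm" .
    have "b \<otimes> g \<otimes> inv b = (b \<otimes> a [^] p \<otimes> inv b) [^] t" using t conj_pow[OF bc apc] by simp
    also have "\<dots> = (a [^] p) [^] (mm * t)" using e1 apc by (simp add: nat_pow_pow)
    finally show ?thesis using apAn by simp
  qed
  have bjA: "\<exists>g' \<in> A. b [^] j \<otimes> g = g' \<otimes> b [^] j" if g: "g \<in> A" for j :: nat and g
    using g
  proof (induction j arbitrary: g)
    case 0
    have "g \<in> carrier G" using 0 Ac by blast
    then show ?case using 0 by (intro bexI[of _ g]) auto
  next
    case (Suc j)
    have gc: "g \<in> carrier G" using Suc.prems Ac by blast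
    have g1: "b \<otimes> g \<otimes> inv b \<in> A" by (rule bA[OF Suc.prems])
    obtain g' where g': "g' \<in> A" "b [^] j \<otimes> (b \<otimes> g \<otimes> inv b) = g' \<otimes> b [^] j"
      using Suc.IH[OF g1] by blast
    have g'c: "g' \<in> carrier G" using g' Ac by blast
    have "b [^] Suc j \<otimes> g = (b [^] j \<otimes> (b \<otimes> g \<otimes> inv b)) \<otimes> b"
      using bc gc by (simp add: m_assoc nat_pow_Suc2)
    also have "\<dots> = g' \<otimes> b [^] Suc j" using g'(2) g'c bc by (simp add: m_assoc)
    finally show ?case using g'(1) by blast
  qed
  define T where "T = (\<lambda>(g, j). g \<otimes> b [^] j) ` (A \<times> {..<p})"
  have Tmem: "g \<otimes> b [^] j \<in> T" if "g \<in> A" "j < p" for g j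
    unfolding T_def using that by (intro image_eqI[of _ _ "(g, j)"]) auto
  have Tc: "T \<subseteq> carrier G" unfolding T_def using Ac bc by auto
  have bpA: "b [^] p = (a [^] p) [^] s'" using bp ac by (simp add: nat_pow_pow)
  have Tsub: "subgroup T G"
  proof (rule finite_subgroupI[OF fin Tc])
    show "\<one> \<in> T" using Tmem[of \<one> 0] subgroup.one_closed[OF Asub] p1 by simp
    show "u \<otimes> v \<in> T" if u: "u \<in> T" and v: "v \<in> T" for u v
    proof -
      obtain g1 j1 where u': "g1 \<in> A" "j1 < p" "u = g1 \<otimes> b [^] j1" using u unfolding T_def by auto
      obtain g2 j2 where v': "g2 \<in> A" "j2 < p" "v = g2 \<otimes> b [^] j2" using v unfolding T_def by auto
      obtain g2' where g2': "g2' \<in> A" "b [^] j1 \<otimes> g2 = g2' \<otimes> b [^] j1" using bjA[OF v'(1)] by blast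
      have c: "g1 \<in> carrier G" "g2 \<in> carrier G" "g2' \<in> carrier G" using u'(1) v'(1) g2'(1) Ac by auto
      have "u \<otimes> v = g1 \<otimes> (b [^] j1 \<otimes> g2) \<otimes> b [^] j2" using u'(3) v'(3) c bc by (simp add: m_assoc)
      also have "\<dots> = (g1 \<otimes> g2') \<otimes> (b [^] j1 \<otimes> b [^] j2)" using g2'(2) c bc by (simp add: m_assoc)
      also have "b [^] j1 \<otimes> b [^] j2 = b [^] (j1 + j2)" using bc by (simp add: nat_pow_mult)
      finally have uv: "u \<otimes> v = (g1 \<otimes> g2') \<otimes> b [^] (j1 + j2)" .
      have g12: "g1 \<otimes> g2' \<in> A" using subgroup.m_closed[OF Asub u'(1) g2'(1)] .
      show ?thesis
      proof (cases "j1 + j2 < p")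
        case True then show ?thesis using uv Tmem[OF g12] by simp
      next
        case False
        then have jj: "j1 + j2 = p + (j1 + j2 - p)" by simp
        have "b [^] (j1 + j2) = b [^] p \<otimes> b [^] (j1 + j2 - p)"
          using bc jj nat_pow_mult[OF bc, of p "j1 + j2 - p"] by simp
        then have "u \<otimes> v = (g1 \<otimes> g2' \<otimes> (a [^] p) [^] s') \<otimes> b [^] (j1 + j2 - p)"
          using uv bpA c bc apc by (simp add: m_assoc)
        moreover have "g1 \<otimes> g2' \<otimes> (a [^] p) [^] s' \<in> A" using subgroup.m_closed[OF Asub g12 apAn] .
        moreover have "j1 + j2 - p < p" using u'(2) v'(2) by simp
        ultimately show ?thesis using Tmem by simp
      qed
    qed
  qed
  have apT: "a [^] p \<in> T" using Tmem[OF apA, of 0] p1 apc by simp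
  have bT: "b \<in> T" using Tmem[of \<one> 1] subgroup.one_closed[OF Asub] p1 bc by simp
  define L where "L = generate G {a [^] p, b}"
  have Lsub: "subgroup L G" unfolding L_def using apc bc by (intro generate_is_subgroup) auto
  have LT: "L \<subseteq> T" unfolding L_def using apT bT Tsub by (intro generate_subgroup_incl) auto
  have apK: "a [^] p \<in> K" by (rule subgroup_nat_pow_closed[OF K aK])
  have LK: "L \<subseteq> K" unfolding L_def using apK bK K by (intro generate_subgroup_incl) auto
  have finA: "finite A" using finite_subset[OF Ac fin] .
  have "card T \<le> card (A \<times> {..<p})" unfolding T_def
    by (rule card_image_le) (simp add: finA)
  also have "\<dots> = p ^ (n - 1) * p" using cardA by (simp add: card_cartesian_product)
  also have "\<dots> = p ^ n"
  proof -
    obtain n' where n': "n = Suc n'" using n1 by (cases n) auto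
    show ?thesis unfolding n' by (simp add: power_Suc2)
  qed
  finally have cT: "card T \<le> card M" using cardM oa by simp
  have finT: "finite T" using Tc fin finite_subset by blast
  have "card L \<le> card T" using LT finT by (rule card_mono[rotated])
  then have "card L < card K" using cT McK by simp
  then obtain c where cc: "c \<in> carrier G" and Lc: "L = generate G {c}" using small_cyc[OF Lsub LK] by blast
  have oc0: "ord c \<noteq> 0" using ord_ge_1[OF fin cc] by simp
  have "a [^] p \<in> L" "b \<in> L" unfolding L_def by (auto intro: generate.incl)
  then obtain i1 i2 where i12: "a [^] p = c [^] (i1::nat)" "b = c [^] (i2::nat)"
    using generate_pow_nat[OF cc oc0] Lc by auto
  have comm: "a [^] p \<otimes> b = b \<otimes> a [^] p" using i12 commute_pow2[OF cc cc refl] by simp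
  \<comment> \<open>elements of order p lie in M\<close>
  define e' where "e' = a [^] (p ^ (n - 1))"
  have e'c: "e' \<in> carrier G" unfolding e'_def using ac by simp
  have e'M: "e' \<in> M" unfolding e'_def M_def using gen_nat_pow_closed[of "{a}" a] ac generate.incl[of a "{a}" G] by simp
  have oe': "ord e' = p"
  proof -
    have d: "p ^ (n - 1) dvd ord a" using oa by (simp add: le_imp_power_dvd)
    have "ord e' = ord a div p ^ (n - 1)" unfolding e'_def by (rule ord_pow[OF ac d]) (use p1 in simp)
    also have "\<dots> = p"
    proof -
      obtain n' where n': "n = Suc n'" using n1 by (cases n) auto
      show ?thesis unfolding oa n' using p1 by simp
    qed
    finally show ?thesis .
  qed
  have e'1: "e' \<noteq> \<one>" using oe' p1 ord_eq_1[OF e'c] by auto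
  have "e' [^] p = \<one>" using oe' pow_ord_eq_1[OF e'c] by simp
  then have e'z: "e' \<in> generate G {z0}" using uniq e'M MK KH by blast
  have z0z: "z0 \<in> generate G {z0}" by (rule generate.incl) simp
  have "z0 \<in> generate G {e'}"
    by (rule cyclic_ppow_sub[OF z0 _ pr z0z e'z oz e'1, of 1]) (use oz in simp)
  moreover have "generate G {e'} \<subseteq> M" using e'M M by (intro generate_subgroup_incl) auto
  ultimately have "z0 \<in> M" by blast
  then have zM: "generate G {z0} \<subseteq> M" using M by (intro generate_subgroup_incl) auto
  have noP: "(a [^] k \<otimes> b) [^] p \<noteq> \<one>" for k :: nat
  proof
    assume w1: "(a [^] k \<otimes> b) [^] p = \<one>"
    have akK: "a [^] k \<in> K" by (rule subgroup_nat_pow_closed[OF K aK])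
    have "a [^] k \<otimes> b \<in> K" by (rule subgroup.m_closed[OF K akK bK])
    then have "a [^] k \<otimes> b \<in> M" using uniq[OF _ w1] KH zM by blast
    moreover have akM: "a [^] k \<in> M" unfolding M_def using gen_nat_pow_closed[of "{a}" a] ac generate.incl[of a "{a}" G] by simp
    ultimately have "inv (a [^] k) \<otimes> (a [^] k \<otimes> b) \<in> M"
      using subgroup.m_closed[OF M] subgroup.m_inv_closed[OF M] by blast
    then have "b \<in> M" using ac bc by simp
    then show False using bM by simp
  qed
  have bconj': "b \<otimes> a \<otimes> inv b \<in> generate G {a}" using bconj unfolding M_def .
  have res: "p = 2 \<and> n = 2 \<and> b \<otimes> a \<otimes> inv b = a [^] (3::nat) \<and> b [^] (2::nat) = a [^] (2::nat)"
    by (rule B_core[OF pr ac bc oa n1 bp slt' comm bconj' noP])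
  have "ord a = 4" using res oa by simp
  then show ?thesis using res aK bK KH bM unfolding M_def by blast
qed

end


lemma mod4a: "(k::nat) < 4 \<Longrightarrow> (i + 3 * k) mod 4 = (i + 4 - k) mod 4"
proof -
  assume "k < 4"
  then have "k = 0 \<or> k = 1 \<or> k = 2 \<or> k = 3" by auto
  moreover have "(i + 6) mod 4 = (i + 2) mod 4"
  proof -
    have "i + 6 = (i + 2) + 1 * 4" by simp
    then show ?thesis by (simp only: mod_mult_self1)
  qed
  moreover have "(i + 9) mod 4 = (i + 1) mod 4" 
  proof -
    have "i + 9 = (i + 1) + 2 * 4" by simp
    then show ?thesis by (simp only: mod_mult_self1)
  qed
  moreover have "(i + 4) mod 4 = i mod 4" by simp
  ultimately show ?thesis by (elim disjE) (simp_all add: add.commute)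
qed
lemma mod4b: "(k::nat) < 4 \<Longrightarrow> (i + 3 * k + 2) mod 4 = (i + 4 - k + 2) mod 4"
proof -
  assume k: "k < 4"
  have "i + 3 * k + 2 = (i + 2) + 3 * k" by simp
  moreover have "i + 4 - k + 2 = (i + 2) + 4 - k" using k by simp
  ultimately show ?thesis using mod4a[OF k, of "i + 2"] by simp
qed

lemma quaternion3_carrier: "carrier (quaternion_group 3) = {(i, j). i < 4 \<and> j < 2}"
  unfolding quaternion_group_def Let_def by simp

lemma quaternion3_mult:
  "(i, j) \<otimes>\<^bsub>quaternion_group 3\<^esub> (k, l) =
     (if j = 0 then ((i + k) mod 4, l)
      else if l = 0 then ((i + 4 - k) mod 4, 1)
      else ((i + 4 - k + 2) mod 4, 0))"
  unfolding quaternion_group_def Let_def by simp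

context group begin

lemma Q8_sub:
  assumes fin: "finite (carrier G)" and a: "a \<in> carrier G" and b: "b \<in> carrier G"
    and oa: "ord a = 4" and conj: "b \<otimes> a \<otimes> inv b = a [^] (3::nat)"
    and b2: "b [^] (2::nat) = a [^] (2::nat)" and bM: "b \<notin> generate G {a}"
  shows "has_gen_quaternion_subgroup G"
proof -
  define f where "f = (\<lambda>(i::nat, j::nat). a [^] i \<otimes> b [^] j)"
  let ?Q = "quaternion_group 3"
  have ba: "b \<otimes> a = a [^] (3::nat) \<otimes> b"
  proof -
    have "b \<otimes> a = b \<otimes> a \<otimes> inv b \<otimes> b" using a b by (simp add: m_assoc)
    then show ?thesis using conj by simp
  qed
  have bak: "b \<otimes> a [^] k = a [^] (3 * k) \<otimes> b" for k :: nat
  proof (induction k)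
    case 0 then show ?case using b by simp
  next
    case (Suc k)
    have "b \<otimes> a [^] Suc k = (b \<otimes> a [^] k) \<otimes> a" using a b by (simp add: m_assoc)
    also have "\<dots> = a [^] (3 * k) \<otimes> (b \<otimes> a)" using Suc a b by (simp add: m_assoc)
    also have "\<dots> = a [^] (3 * k) \<otimes> a [^] (3::nat) \<otimes> b" using ba a b by (simp add: m_assoc)
    also have "\<dots> = a [^] (3 * Suc k) \<otimes> b" using a by (simp add: nat_pow_mult add.commute)
    finally show ?case .
  qed
  have amod: "a [^] (i::nat) = a [^] (i mod 4)" for i using pow_mod_ord[OF a, of i] oa by simp
  have fc: "f u \<in> carrier G" for u unfolding f_def using a b by (auto split: prod.splits)
  have fhom: "f (u \<otimes>\<^bsub>?Q\<^esub> v) = f u \<otimes> f v" if u: "u \<in> carrier ?Q" and v: "v \<in> carrier ?Q" for u v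
  proof -
    obtain i j where ij: "u = (i, j)" "i < 4" "j < 2" using u by (auto simp: quaternion3_carrier)
    obtain k l where kl: "v = (k, l)" "k < 4" "l < 2" using v by (auto simp: quaternion3_carrier)
    have fu: "f u = a [^] i \<otimes> b [^] j" and fv: "f v = a [^] k \<otimes> b [^] l" unfolding f_def ij kl by simp_all
    consider "j = 0" | "j = 1" "l = 0" | "j = 1" "l = 1" using ij kl by linarith
    then show ?thesis
    proof cases
      case 1
      have "f u \<otimes> f v = a [^] (i + k) \<otimes> b [^] l" using fu fv 1 a b by (simp add: m_assoc nat_pow_mult_assoc)
      also have "\<dots> = a [^] ((i + k) mod 4) \<otimes> b [^] l" using amod[of "i + k"] by simp
      finally show ?thesis unfolding ij kl using 1 a b by (simp add: quaternion3_mult f_def)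
    next
      case 2
      have "f u \<otimes> f v = a [^] i \<otimes> (b \<otimes> a [^] k)" using fu fv 2 a b by (simp add: m_assoc)
      also have "\<dots> = a [^] (i + 3 * k) \<otimes> b" using bak[of k] a b by (simp add: m_assoc nat_pow_mult_assoc)
      also have "a [^] (i + 3 * k) = a [^] ((i + 4 - k) mod 4)"
      proof -
        have "(i + 3 * k) mod 4 = (i + 4 - k) mod 4" using mod4a[OF kl(2)] .
        then show ?thesis using amod[of "i + 3 * k"] amod[of "i + 4 - k"] by simp
      qed
      finally show ?thesis unfolding ij kl using 2 a b by (simp add: quaternion3_mult f_def)
    next
      case 3
      have "f u \<otimes> f v = a [^] i \<otimes> (b \<otimes> a [^] k) \<otimes> b" using fu fv 3 a b by (simp add: m_assoc)
      also have "\<dots> = a [^] (i + 3 * k) \<otimes> b [^] (2::nat)" using bak[of k] a b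
        by (simp add: m_assoc nat_pow_mult_assoc numeral_2_eq_2)
      also have "\<dots> = a [^] (i + 3 * k + 2)" using b2 a by (simp add: nat_pow_mult)
      also have "\<dots> = a [^] ((i + 4 - k + 2) mod 4)"
      proof -
        have "(i + 3 * k + 2) mod 4 = (i + 4 - k + 2) mod 4" using mod4b[OF kl(2)] .
        then show ?thesis using amod[of "i + 3 * k + 2"] amod[of "i + 4 - k + 2"] by simp
      qed
      finally show ?thesis unfolding ij kl using 3 a b by (simp add: quaternion3_mult f_def)
    qed
  qed
  have Qclosed: "u \<otimes>\<^bsub>?Q\<^esub> v \<in> carrier ?Q" if "u \<in> carrier ?Q" "v \<in> carrier ?Q" for u v
    using that by (auto simp: quaternion3_carrier quaternion3_mult)
  have finj: "inj_on f (carrier ?Q)"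
  proof (rule inj_onI)
    fix u v assume u: "u \<in> carrier ?Q" and v: "v \<in> carrier ?Q" and e: "f u = f v"
    obtain i j where ij: "u = (i, j)" "i < 4" "j < 2" using u by (auto simp: quaternion3_carrier)
    obtain k l where kl: "v = (k, l)" "k < 4" "l < 2" using v by (auto simp: quaternion3_carrier)
    have e': "a [^] i \<otimes> b [^] j = a [^] k \<otimes> b [^] l" using e unfolding f_def ij kl by simp
    have aa: "a [^] (m::nat) \<in> generate G {a}" for m
      using gen_nat_pow_closed[of "{a}" a m] a generate.incl[of a "{a}" G] by simp
    have jl: "j = l"
    proof (rule ccontr)
      assume "j \<noteq> l"
      then have "(j = 0 \<and> l = 1) \<or> (j = 1 \<and> l = 0)" using ij kl by linarith
      then have "b = inv (a [^] k) \<otimes> a [^] i \<or> b = inv (a [^] i) \<otimes> a [^] k"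
      proof
        assume "j = 0 \<and> l = 1"
        then have "a [^] i = a [^] k \<otimes> b" using e' a b by simp
        then show ?thesis using a b by (simp add: m_assoc)
      next
        assume "j = 1 \<and> l = 0"
        then have "a [^] i \<otimes> b = a [^] k" using e' a b by simp
        then have "b = inv (a [^] i) \<otimes> a [^] k" using a b by (metis inv_cancel_l nat_pow_closed)
        then show ?thesis by simp
      qed
      moreover have "inv (a [^] k) \<otimes> a [^] i \<in> generate G {a}" "inv (a [^] i) \<otimes> a [^] k \<in> generate G {a}"
        using aa generate_m_inv_closed[of "{a}"] a by (auto intro: generate.eng)
      ultimately show False using bM by auto
    qed
    then have "a [^] i = a [^] k" using e' a b by simp
    then have "i = k" using ord_inj[OF a] ij kl oa unfolding inj_on_def by auto
    then show "u = v" using ij kl jl by simp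
  qed
  define Q where "Q = f ` carrier ?Q"
  have Qc: "Q \<subseteq> carrier G" unfolding Q_def using fc by auto
  have Qsub: "subgroup Q G"
  proof (rule finite_subgroupI[OF fin Qc])
    have z: "(0, 0) \<in> carrier ?Q" by (simp add: quaternion3_carrier)
    have "\<one> = f (0, 0)" unfolding f_def by simp
    then show "\<one> \<in> Q" unfolding Q_def using z by (rule image_eqI)
    show "x \<otimes> y \<in> Q" if x: "x \<in> Q" and y: "y \<in> Q" for x y
    proof -
      obtain u where u: "u \<in> carrier ?Q" "x = f u" using x unfolding Q_def by blast
      obtain v where v: "v \<in> carrier ?Q" "y = f v" using y unfolding Q_def by blast
      have "x \<otimes> y = f (u \<otimes>\<^bsub>?Q\<^esub> v)" using fhom[OF u(1) v(1)] u(2) v(2) by simp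
      then show ?thesis unfolding Q_def using Qclosed[OF u(1) v(1)] by (rule image_eqI)
    qed
  qed
  define g where "g = the_inv_into (carrier ?Q) f"
  have bijf: "bij_betw f (carrier ?Q) Q" unfolding Q_def using finj by (simp add: bij_betw_def)
  have bijg: "bij_betw g Q (carrier ?Q)" unfolding g_def using bij_betw_the_inv_into[OF bijf] .
  have ghom: "g \<in> hom (G\<lparr>carrier := Q\<rparr>) ?Q"
  proof (rule homI)
    show "g x \<in> carrier ?Q" if "x \<in> carrier (G\<lparr>carrier := Q\<rparr>)" for x
      using that bij_betwE[OF bijg] by simp
    show "g (x \<otimes>\<^bsub>G\<lparr>carrier := Q\<rparr>\<^esub> y) = g x \<otimes>\<^bsub>?Q\<^esub> g y"
      if x: "x \<in> carrier (G\<lparr>carrier := Q\<rparr>)" and y: "y \<in> carrier (G\<lparr>carrier := Q\<rparr>)" for x y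
    proof -
      have x': "x \<in> Q" and y': "y \<in> Q" using x y by simp_all
      obtain u where u: "u \<in> carrier ?Q" "x = f u" using x' unfolding Q_def by blast
      obtain v where v: "v \<in> carrier ?Q" "y = f v" using y' unfolding Q_def by blast
      have "x \<otimes> y = f (u \<otimes>\<^bsub>?Q\<^esub> v)" using fhom[OF u(1) v(1)] u(2) v(2) by simp
      then have "g (x \<otimes> y) = u \<otimes>\<^bsub>?Q\<^esub> v"
        unfolding g_def using the_inv_into_f_f[OF finj Qclosed[OF u(1) v(1)]] by simp
      moreover have "g x = u" unfolding g_def u(2) using the_inv_into_f_f[OF finj u(1)] .
      moreover have "g y = v" unfolding g_def v(2) using the_inv_into_f_f[OF finj v(1)] .
      ultimately show ?thesis by simp
    qed
  qed
  have "g \<in> iso (G\<lparr>carrier := Q\<rparr>) ?Q" unfolding iso_def using ghom bijg by simp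
  then have "G\<lparr>carrier := Q\<rparr> \<cong> ?Q" unfolding is_iso_def by blast
  then show ?thesis unfolding has_gen_quaternion_subgroup_def using Qsub by (intro exI[of _ Q] exI[of _ 3]) simp
qed

end


context group begin

lemma gen_subgroup_self: "subgroup H G \<Longrightarrow> generate G H = H"
  using generate_subgroup_incl[of H H] generate.incl[of _ H G] by blast

lemma ord_p_of_pow:
  assumes pr: "Factorial_Ring.prime p" and w: "w \<in> carrier G" and wp: "w [^] p = \<one>" and w1: "w \<noteq> \<one>"
  shows "ord w = p"
proof -
  have "ord w dvd p" using pow_eq_id[OF w] wp by simp
  moreover have "ord w \<noteq> 1" using ord_eq_1[OF w] w1 by simp
  moreover have "\<forall>m. m dvd p \<longrightarrow> m = 1 \<or> m = p" using pr by (simp add: prime_nat_iff)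
  ultimately show ?thesis by blast
qed

lemma noncyc_pair:
  assumes fin: "finite (carrier G)" and o: "order G = p ^ k" and pr: "Factorial_Ring.prime p"
    and x0: "x0 \<in> carrier G" and y0: "y0 \<in> carrier G" and ox: "ord x0 = p" and y1: "y0 \<noteq> \<one>"
    and nx: "x0 \<notin> generate G {y0}"
  shows "\<not> cyclic_group (subgroup_generated G {x0, y0})"
proof
  assume "cyclic_group (subgroup_generated G {x0, y0})"
  then obtain c where c: "c \<in> carrier G" "generate G {x0, y0} = generate G {c}"
    using cyclic_sg_iff[of "{x0, y0}"] x0 y0 by auto
  have "x0 \<in> generate G {c}" "y0 \<in> generate G {c}" using c(2) generate.incl[of _ "{x0, y0}" G] by auto
  moreover obtain m where "ord c = p ^ m" using ord_primepow[OF fin o pr c(1)] by blast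
  ultimately have "x0 \<in> generate G {y0}" using cyclic_ppow_sub[OF c(1) _ pr _ _ ox y1] by blast
  then show False using nx by simp
qed

lemma unique_to_Q:
  assumes fin: "finite (carrier G)" and o: "order G = p ^ k" and pr: "Factorial_Ring.prime p"
    and H: "subgroup H G" and ncyc: "\<not> (\<exists>c \<in> carrier G. H = generate G {c})"
    and z0: "z0 \<in> carrier G" and oz: "ord z0 = p"
    and uniq: "\<And>w. w \<in> H \<Longrightarrow> w [^] p = \<one> \<Longrightarrow> w \<in> generate G {z0}"
  shows "has_gen_quaternion_subgroup G"
proof -
  obtain a b where ab: "a \<in> H" "b \<in> H" "p = 2" "ord a = 4" "b \<otimes> a \<otimes> inv b = a [^] (3::nat)"
    "b [^] (2::nat) = a [^] (2::nat)" "b \<notin> generate G {a}"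
    using unique_p_Q8[OF fin o pr H ncyc z0 oz uniq] by blast
  have Hc: "H \<subseteq> carrier G" using H subgroup.subset by blast
  show ?thesis using Q8_sub[OF fin _ _ ab(4,5,6,7)] ab(1,2) Hc by blast
qed

end

theorem proposition3p14:
  fixes G :: "('a, 'b) monoid_scheme" and p :: nat
    and Gt :: "('c, 'd) monoid_scheme" and \<pi> :: "'c \<Rightarrow> 'a"
  assumes "p_group p G"
    and "\<not> cyclic_group G"
    and "\<not> has_gen_quaternion_subgroup G"
    and "\<not> cyclic_group (subgroup_generated G (derived G (carrier G)))
         \<or> (\<exists>g \<in> carrier G. group.ord G g > p \<and>
              generate G {g} \<inter> derived G (carrier G) = {\<one>\<^bsub>G\<^esub>})"
    and "schur_cover Gt G \<pi>"
  shows "enhanced_power_edges G \<subset> deep_commuting_edges Gt G \<pi>"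
proof -
  have grp: "group G" and fin: "finite (carrier G)" and pr: "Factorial_Ring.prime p"
    using assms(1) unfolding p_group_def by auto
  obtain k where o: "order G = p ^ k" using assms(1) unfolding p_group_def by auto
  interpret G: group G by (rule grp)
  have grpT: "group Gt" and epi: "\<pi> \<in> epi Gt G" and ker: "kernel Gt G \<pi> \<subseteq> center_of Gt"
    using assms(5) unfolding schur_cover_def stem_extension_def by auto
  interpret T: group Gt by (rule grpT)
  have hom: "\<pi> \<in> hom Gt G" and surj: "\<pi> ` carrier Gt = carrier G" using epi unfolding epi_def by auto
  have p1: "p > 1" using pr prime_gt_1_nat by blast
  define D where "D = derived G (carrier G)"
  have Dsub: "subgroup D G" unfolding D_def using G.derived_is_subgroup by simp
  have Dnorm: "D \<lhd> G" unfolding D_def by (rule G.derived_self_is_normal)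
  have Dnrm: "\<And>g n. g \<in> carrier G \<Longrightarrow> n \<in> D \<Longrightarrow> g \<otimes>\<^bsub>G\<^esub> n \<otimes>\<^bsub>G\<^esub> inv\<^bsub>G\<^esub> g \<in> D"
    using normal.inv_op_closed2[OF Dnorm] by blast
  have Dc: "D \<subseteq> carrier G" using Dsub subgroup.subset by blast
  have incl: "enhanced_power_edges G \<subseteq> deep_commuting_edges Gt G \<pi>"
  proof
    fix e assume "e \<in> enhanced_power_edges G"
    then obtain x y where e: "e = {x, y}" "x \<in> carrier G" "y \<in> carrier G" "x \<noteq> y"
      "cyclic_group (subgroup_generated G {x, y})" unfolding enhanced_power_edges_def by blast
    have "\<forall>u \<in> carrier Gt. \<forall>v \<in> carrier Gt. \<pi> u = x \<longrightarrow> \<pi> v = y \<longrightarrow> u \<otimes>\<^bsub>Gt\<^esub> v = v \<otimes>\<^bsub>Gt\<^esub> u"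
      by (rule T.cyclic_lift_commute[OF grp hom surj ker e(2,3,5)])
    then show "e \<in> deep_commuting_edges Gt G \<pi>" unfolding deep_commuting_edges_def using e by blast
  qed
  have witness: "{x0, y0} \<in> deep_commuting_edges Gt G \<pi> - enhanced_power_edges G"
    if x0: "x0 \<in> center_of G" and ox: "G.ord x0 = p" and y0: "y0 \<in> carrier G" and y1: "y0 \<noteq> \<one>\<^bsub>G\<^esub>"
      and nx: "x0 \<notin> generate G {y0}"
      and yD: "y0 \<in> D \<or> (\<exists>g \<in> carrier G. y0 = g [^]\<^bsub>G\<^esub> p)" for x0 y0
  proof -
    have x0c: "x0 \<in> carrier G" using x0 unfolding center_of_def by auto
    have xp: "x0 [^]\<^bsub>G\<^esub> p = \<one>\<^bsub>G\<^esub>" using ox G.pow_ord_eq_1[OF x0c] by simp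
    have ne: "x0 \<noteq> y0" using nx generate.incl[of y0 "{y0}" G] by auto
    have "\<forall>u \<in> carrier Gt. \<forall>v \<in> carrier Gt. \<pi> u = x0 \<longrightarrow> \<pi> v = y0 \<longrightarrow> u \<otimes>\<^bsub>Gt\<^esub> v = v \<otimes>\<^bsub>Gt\<^esub> u"
      by (rule T.lift_commute[OF grp hom surj ker x0 xp]) (use yD in \<open>simp add: D_def\<close>)
    then have in1: "{x0, y0} \<in> deep_commuting_edges Gt G \<pi>"
      unfolding deep_commuting_edges_def using x0c y0 ne by blast
    have nc: "\<not> cyclic_group (subgroup_generated G {x0, y0})"
      by (rule G.noncyc_pair[OF fin o pr x0c y0 ox y1 nx])
    have "{x0, y0} \<notin> enhanced_power_edges G"
    proof
      assume "{x0, y0} \<in> enhanced_power_edges G"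
      then obtain x y where xy: "{x0, y0} = {x, y}" "cyclic_group (subgroup_generated G {x, y})"
        unfolding enhanced_power_edges_def by blast
      then show False using nc by simp
    qed
    then show ?thesis using in1 by blast
  qed
  have genpow: "y [^]\<^bsub>G\<^esub> (n::nat) \<in> generate G {y}" if "y \<in> carrier G" for y n
    using G.gen_nat_pow_closed[of "{y}" y n] that generate.incl[of y "{y}" G] by simp
  have "\<exists>x0 y0. x0 \<in> center_of G \<and> G.ord x0 = p \<and> y0 \<in> carrier G \<and> y0 \<noteq> \<one>\<^bsub>G\<^esub>
          \<and> x0 \<notin> generate G {y0} \<and> (y0 \<in> D \<or> (\<exists>g \<in> carrier G. y0 = g [^]\<^bsub>G\<^esub> p))"
    using assms(4) unfolding D_def[symmetric]
  proof
    assume nc: "\<not> cyclic_group (subgroup_generated G D)"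
    have ncD: "\<not> (\<exists>c \<in> carrier G. D = generate G {c})"
      using nc G.cyclic_sg_iff[OF Dc] G.gen_subgroup_self[OF Dsub] by simp
    have "D \<noteq> {\<one>\<^bsub>G\<^esub>}"
    proof
      assume "D = {\<one>\<^bsub>G\<^esub>}"
      then have "D = generate G {\<one>\<^bsub>G\<^esub>}" by (simp add: G.generate_one)
      then show False using ncD by blast
    qed
    then obtain x0 where x0: "x0 \<in> D" "x0 \<in> center_of G" "G.ord x0 = p"
      using G.center_meets_normal[OF fin o pr Dsub Dnrm] by blast
    have x0c: "x0 \<in> carrier G" using x0 Dc by blast
    have x01: "x0 \<noteq> \<one>\<^bsub>G\<^esub>" using x0(3) p1 G.ord_eq_1[OF x0c] by auto
    show ?thesis
    proof (cases "\<exists>y0 \<in> D. y0 \<noteq> \<one>\<^bsub>G\<^esub> \<and> x0 \<notin> generate G {y0}")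
      case True
      then show ?thesis using x0 Dc by blast
    next
      case False
      have uniq: "w \<in> generate G {x0}" if w: "w \<in> D" "w [^]\<^bsub>G\<^esub> p = \<one>\<^bsub>G\<^esub>" for w
      proof (cases "w = \<one>\<^bsub>G\<^esub>")
        case True then show ?thesis by (simp add: generate.one)
      next
        case w1: False
        have wc: "w \<in> carrier G" using w Dc by blast
        have xw: "x0 \<in> generate G {w}" using False w(1) w1 by blast
        have ow: "G.ord w = p" by (rule G.ord_p_of_pow[OF pr wc w(2) w1])
        have ww: "w \<in> generate G {w}" by (rule generate.incl) simp
        show ?thesis by (rule G.cyclic_ppow_sub[OF wc _ pr ww xw ow x01, of 1]) (use ow in simp)
      qed
      have "has_gen_quaternion_subgroup G" by (rule G.unique_to_Q[OF fin o pr Dsub ncD x0c x0(3) uniq])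
      then show ?thesis using assms(3) by simp
    qed
  next
    assume "\<exists>g \<in> carrier G. p < G.ord g \<and> generate G {g} \<inter> D = {\<one>\<^bsub>G\<^esub>}"
    then obtain g where g: "g \<in> carrier G" "p < G.ord g" "generate G {g} \<inter> D = {\<one>\<^bsub>G\<^esub>}" by blast
    define y0 where "y0 = g [^]\<^bsub>G\<^esub> p"
    have y0c: "y0 \<in> carrier G" unfolding y0_def using g by simp
    have y01: "y0 \<noteq> \<one>\<^bsub>G\<^esub>"
    proof
      assume "y0 = \<one>\<^bsub>G\<^esub>"
      then have "G.ord g dvd p" unfolding y0_def using G.pow_eq_id[OF g(1)] by simp
      then show False using g(2) p1 by (simp add: dvd_imp_le leD)
    qed
    have g1: "g \<noteq> \<one>\<^bsub>G\<^esub>" using y01 unfolding y0_def by auto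
    have y0g: "generate G {y0} \<subseteq> generate G {g}"
      unfolding y0_def using genpow[OF g(1), of p] g(1)
      by (intro G.generate_subgroup_incl G.generate_is_subgroup) auto
    have "\<exists>x0. x0 \<in> center_of G \<and> G.ord x0 = p \<and> x0 \<notin> generate G {g}"
    proof (cases "D = {\<one>\<^bsub>G\<^esub>}")
      case False
      then obtain x0 where x0: "x0 \<in> D" "x0 \<in> center_of G" "G.ord x0 = p"
        using G.center_meets_normal[OF fin o pr Dsub Dnrm] by blast
      have x0c: "x0 \<in> carrier G" using x0 Dc by blast
      have x01: "x0 \<noteq> \<one>\<^bsub>G\<^esub>" using x0(3) p1 G.ord_eq_1[OF x0c] by auto
      have "x0 \<notin> generate G {g}" using g(3) x0(1) x01 by blast
      then show ?thesis using x0 by blast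
    next
      case True
      have comm: "x \<otimes>\<^bsub>G\<^esub> y = y \<otimes>\<^bsub>G\<^esub> x" if "x \<in> carrier G" "y \<in> carrier G" for x y
      proof -
        have "x \<otimes>\<^bsub>G\<^esub> y \<otimes>\<^bsub>G\<^esub> inv\<^bsub>G\<^esub> x \<otimes>\<^bsub>G\<^esub> inv\<^bsub>G\<^esub> y \<in> D"
          unfolding D_def derived_def using that by (intro generate.incl) blast
        then have e: "x \<otimes>\<^bsub>G\<^esub> y \<otimes>\<^bsub>G\<^esub> inv\<^bsub>G\<^esub> x \<otimes>\<^bsub>G\<^esub> inv\<^bsub>G\<^esub> y = \<one>\<^bsub>G\<^esub>" using True by blast
        have "x \<otimes>\<^bsub>G\<^esub> y = x \<otimes>\<^bsub>G\<^esub> y \<otimes>\<^bsub>G\<^esub> inv\<^bsub>G\<^esub> x \<otimes>\<^bsub>G\<^esub> inv\<^bsub>G\<^esub> y \<otimes>\<^bsub>G\<^esub> y \<otimes>\<^bsub>G\<^esub> x"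
          using that by (simp add: G.m_assoc)
        then show ?thesis using e that by simp
      qed
      have cent: "x \<in> center_of G" if "x \<in> carrier G" for x
        unfolding center_of_def using that comm by blast
      show ?thesis
      proof (cases "\<exists>x0 \<in> carrier G. x0 [^]\<^bsub>G\<^esub> p = \<one>\<^bsub>G\<^esub> \<and> x0 \<noteq> \<one>\<^bsub>G\<^esub> \<and> x0 \<notin> generate G {g}")
        case True
        then obtain x0 where x0: "x0 \<in> carrier G" "x0 [^]\<^bsub>G\<^esub> p = \<one>\<^bsub>G\<^esub>" "x0 \<noteq> \<one>\<^bsub>G\<^esub>" "x0 \<notin> generate G {g}"
          by blast
        have "G.ord x0 = p" by (rule G.ord_p_of_pow[OF pr x0(1,2,3)])
        then show ?thesis using x0 cent by blast
      next
        case False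
        obtain nz where nz: "G.ord (g [^]\<^bsub>G\<^esub> (nz::nat)) = p" using G.exists_ord_p[OF fin o pr g(1) g1] by blast
        define z0 where "z0 = g [^]\<^bsub>G\<^esub> nz"
        have z0c: "z0 \<in> carrier G" unfolding z0_def using g by simp
        have oz: "G.ord z0 = p" using nz unfolding z0_def .
        have z01: "z0 \<noteq> \<one>\<^bsub>G\<^esub>" using oz p1 G.ord_eq_1[OF z0c] by auto
        have z0g: "z0 \<in> generate G {g}" unfolding z0_def by (rule genpow[OF g(1)])
        obtain mg where mg: "G.ord g = p ^ mg" using G.ord_primepow[OF fin o pr g(1)] by blast
        have uniq: "w \<in> generate G {z0}" if w: "w \<in> carrier G" "w [^]\<^bsub>G\<^esub> p = \<one>\<^bsub>G\<^esub>" for w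
        proof (cases "w = \<one>\<^bsub>G\<^esub>")
          case True then show ?thesis by (simp add: generate.one)
        next
          case w1: False
          have wg: "w \<in> generate G {g}" using False w w1 by blast
          have ow: "G.ord w = p" by (rule G.ord_p_of_pow[OF pr w(1,2) w1])
          show ?thesis by (rule G.cyclic_ppow_sub[OF g(1) mg pr wg z0g ow z01])
        qed
        have ncG: "\<not> (\<exists>c \<in> carrier G. carrier G = generate G {c})"
        proof
          assume "\<exists>c \<in> carrier G. carrier G = generate G {c}"
          then obtain c where c: "c \<in> carrier G" "carrier G = generate G {c}" by blast
          have "carrier G = range (\<lambda>n::int. c [^]\<^bsub>G\<^esub> n)" using c G.generate_pow[OF c(1)] by auto
          then have "cyclic_group G" using G.cyclic_group c(1) by blast
          then show False using assms(2) by simp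
        qed
        have "has_gen_quaternion_subgroup G"
          by (rule G.unique_to_Q[OF fin o pr G.subgroup_self ncG z0c oz uniq])
        then show ?thesis using assms(3) by simp
      qed
    qed
    then obtain x0 where x0: "x0 \<in> center_of G" "G.ord x0 = p" "x0 \<notin> generate G {g}" by blast
    have "x0 \<notin> generate G {y0}" using x0(3) y0g by blast
    then show ?thesis using x0 y0c y01 g(1) unfolding y0_def by blast
  qed
  then obtain x0 y0 where "x0 \<in> center_of G" "G.ord x0 = p" "y0 \<in> carrier G" "y0 \<noteq> \<one>\<^bsub>G\<^esub>"
    "x0 \<notin> generate G {y0}" "y0 \<in> D \<or> (\<exists>g \<in> carrier G. y0 = g [^]\<^bsub>G\<^esub> p)" by blast
  from witness[OF this] have "{x0, y0} \<in> deep_commuting_edges Gt G \<pi> - enhanced_power_edges G" .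
  then show ?thesis using incl by blast
qed


end
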